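(* For every discrete group $G$ and every normalized 2-cocycle $\sigma$ on $G$, $M_0A(G,\sigma)=M_0A(G)$, and for $\varphi$ in this set the cb-norm $\|M_\varphi\|_{cb}$ computed on $C^*_r(G,\sigma)$ does not depend on $\sigma$. More precisely, for $\varphi:G\to\mathbb{C}$, one has $\varphi\in M_0A(G,\sigma)$ if and only if the kernel $K_\varphi(s,t)=\varphi(st^{-1})$ is a Schur multiplier on $B(\ell^2(G))$, and then $\|M_\varphi\|_{cb}=\|S_{K_\varphi}\|$.
   Context: $\sigma:G\times G\to\mathbb{T}$ is a normalized 2-cocycle ($\sigma(g,h)\sigma(gh,k)=\sigma(h,k)\sigma(g,hk)$, $\sigma(g,e)=\sigma(e,g)=1$); $\Lambda_\sigma(g)$ is the unitary on $\ell^2(G)$ with $(\Lambda_\sigma(g)\xi)(h)=\sigma(g,g^{-1}h)\xi(g^{-1}h)$; $C^*_r(G,\sigma)$ is the operator-norm closure of $\mathbb{C}(G,\sigma)=\mathrm{span}\,\Lambda_\sigma(G)$. For $\varphi:G\to\mathbb{C}$, $M_\varphi:\mathbb{C}(G,\sigma)\to\mathbb{C}(G,\sigma)$ is the linear map with $M_\varphi(\Lambda_\sigma(g))=\varphi(g)\Lambda_\sigma(g)$; $\varphi\in MA(G,\sigma)$ (a $\sigma$-multiplier) if $M_\varphi$ is bounded in operator norm, in which case $M_\varphi$ also denotes its extension to $C^*_r(G,\sigma)$. $M_0A(G,\sigma)$ is the set of $\varphi\in MA(G,\sigma)$ with $M_\varphi$ completely bounded, with norm $\|\varphi\|_{cb}=\|M_\varphi\|_{cb}$;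 $M_0A(G)=M_0A(G,1)$. A kernel $K:G\times G\to\mathbb{C}$ is a Schur multiplier if for every $A\in B(\ell^2(G))$ with matrix $[A(s,t)]$ in the canonical basis, $[K(s,t)A(s,t)]$ is the matrix of a bounded operator $S_K(A)$; $S_K$ is then a bounded map on $B(\ell^2(G))$. *)

theory Defs
  imports "HOL-Analysis.Analysis"
begin

text \<open>Discrete group: a type of class group_add (the group law is written +,
  not assumed commutative; the inverse of t is - t, so s t^-1 is s + - t).
  Bounded operators on l2(I) are represented by their matrices in the
  canonical basis; a matrix is (the matrix of) a bounded operator iff its
  sesquilinear form on finitely supported vectors is bounded, and the
  operator norm is the supremum of that form over unit vectors.\<close>

definition supp :: "('i \<Rightarrow> complex) \<Rightarrow> 'i set" where
  "supp x = {i. x i \<noteq> 0}"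

definition fin_vec :: "('i \<Rightarrow> complex) \<Rightarrow> bool" where
  "fin_vec x \<longleftrightarrow> finite (supp x)"

definition l2norm :: "('i \<Rightarrow> complex) \<Rightarrow> real" where
  "l2norm x = sqrt (\<Sum>i\<in>supp x. (cmod (x i))\<^sup>2)"

definition mat_form :: "('i \<Rightarrow> 'i \<Rightarrow> complex) \<Rightarrow> ('i \<Rightarrow> complex) \<Rightarrow> ('i \<Rightarrow> complex) \<Rightarrow> complex" where
  "mat_form A \<xi> \<eta> = (\<Sum>s\<in>supp \<eta>. \<Sum>t\<in>supp \<xi>. cnj (\<eta> s) * A s t * \<xi> t)"

definition mat_bounded :: "('i \<Rightarrow> 'i \<Rightarrow> complex) \<Rightarrow> bool" where
  "mat_bounded A \<longleftrightarrow> (\<exists>C. \<forall>\<xi> \<eta>. fin_vec \<xi> \<longrightarrow> fin_vec \<eta> \<longrightarrow>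
      cmod (mat_form A \<xi> \<eta>) \<le> C * l2norm \<xi> * l2norm \<eta>)"

definition mat_norm :: "('i \<Rightarrow> 'i \<Rightarrow> complex) \<Rightarrow> real" where
  "mat_norm A = Sup {cmod (mat_form A \<xi> \<eta>) | \<xi> \<eta>.
      fin_vec \<xi> \<and> fin_vec \<eta> \<and> l2norm \<xi> \<le> 1 \<and> l2norm \<eta> \<le> 1}"

definition cocycle2 :: "('g::group_add \<Rightarrow> 'g \<Rightarrow> complex) \<Rightarrow> bool" where
  "cocycle2 \<sigma> \<longleftrightarrow> (\<forall>g h. cmod (\<sigma> g h) = 1)
     \<and> (\<forall>g h k. \<sigma> g h * \<sigma> (g + h) k = \<sigma> h k * \<sigma> g (h + k))
     \<and> (\<forall>g. \<sigma> g 0 = 1 \<and> \<sigma> 0 g = 1)"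

text \<open>Matrix of the element sum_g c(g) Lambda_sigma(g) of C(G,sigma)
  (c finitely supported): the (h,k) entry of Lambda_sigma(g) is
  sigma(g, g^-1 h) if k = g^-1 h and 0 otherwise.\<close>
definition tw_mat :: "('g::group_add \<Rightarrow> 'g \<Rightarrow> complex) \<Rightarrow> ('g \<Rightarrow> complex) \<Rightarrow> 'g \<Rightarrow> 'g \<Rightarrow> complex" where
  "tw_mat \<sigma> c = (\<lambda>h k. c (h + - k) * \<sigma> (h + - k) k)"

text \<open>An n x n matrix [x_ij] over C(G,sigma), viewed as an operator on
  l2(G)^n = l2({0..<n} x G) (indices i >= n carry zero entries).\<close>
definition block_mat :: "('g::group_add \<Rightarrow> 'g \<Rightarrow> complex) \<Rightarrow> nat \<Rightarrow> (nat \<Rightarrow> nat \<Rightarrow> 'g \<Rightarrow> complex)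
    \<Rightarrow> (nat \<times> 'g) \<Rightarrow> (nat \<times> 'g) \<Rightarrow> complex" where
  "block_mat \<sigma> n C = (\<lambda>(i, h) (j, k). if i < n \<and> j < n then tw_mat \<sigma> (C i j) h k else 0)"

definition MA :: "('g::group_add \<Rightarrow> 'g \<Rightarrow> complex) \<Rightarrow> ('g \<Rightarrow> complex) set" where
  "MA \<sigma> = {\<phi>. \<exists>K. \<forall>c. fin_vec c \<longrightarrow>
      mat_norm (tw_mat \<sigma> (\<lambda>g. \<phi> g * c g)) \<le> K * mat_norm (tw_mat \<sigma> c)}"

text \<open>K bounds all amplifications id_n \<otimes> M_phi on M_n(C(G,sigma)).\<close>
definition cb_bound :: "('g::group_add \<Rightarrow> 'g \<Rightarrow> complex) \<Rightarrow> ('g \<Rightarrow> complex) \<Rightarrow> real \<Rightarrow> bool" where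
  "cb_bound \<sigma> \<phi> K \<longleftrightarrow> 0 \<le> K \<and> (\<forall>n C. (\<forall>i j. fin_vec (C i j)) \<longrightarrow>
      mat_norm (block_mat \<sigma> n (\<lambda>i j g. \<phi> g * C i j g)) \<le> K * mat_norm (block_mat \<sigma> n C))"

definition M0A :: "('g::group_add \<Rightarrow> 'g \<Rightarrow> complex) \<Rightarrow> ('g \<Rightarrow> complex) set" where
  "M0A \<sigma> = {\<phi>. \<phi> \<in> MA \<sigma> \<and> (\<exists>K. cb_bound \<sigma> \<phi> K)}"

text \<open>cb-norm of M_phi (equal on C(G,sigma) and on its closure C*_r(G,sigma)).\<close>
definition cb_norm :: "('g::group_add \<Rightarrow> 'g \<Rightarrow> complex) \<Rightarrow> ('g \<Rightarrow> complex) \<Rightarrow> real" where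
  "cb_norm \<sigma> \<phi> = Inf {K. cb_bound \<sigma> \<phi> K}"

definition schur_mult :: "('i \<Rightarrow> 'i \<Rightarrow> complex) \<Rightarrow> bool" where
  "schur_mult K \<longleftrightarrow> (\<forall>A. mat_bounded A \<longrightarrow> mat_bounded (\<lambda>s t. K s t * A s t))"

definition schur_norm :: "('i \<Rightarrow> 'i \<Rightarrow> complex) \<Rightarrow> real" where
  "schur_norm K = Inf {C. 0 \<le> C \<and> (\<forall>A. mat_bounded A \<longrightarrow>
      mat_norm (\<lambda>s t. K s t * A s t) \<le> C * mat_norm A)}"

end

theory Submission
  imports Defs
begin


definition nsq :: "('i \<Rightarrow> complex) \<Rightarrow> real" where
  "nsq x = (\<Sum>i\<in>supp x. (cmod (x i))\<^sup>2)"

lemma l2norm_nsq: "l2norm x = sqrt (nsq x)"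
  by (simp add: l2norm_def nsq_def)

lemma nsq_nonneg: "0 \<le> nsq x"
  by (simp add: nsq_def sum_nonneg)

lemma l2norm_nonneg: "0 \<le> l2norm x"
  by (simp add: l2norm_def sum_nonneg)

lemma l2norm_sq: "(l2norm x)\<^sup>2 = nsq x"
  by (simp add: l2norm_nsq nsq_nonneg)

lemma in_supp: "i \<in> supp x \<longleftrightarrow> x i \<noteq> 0"
  by (simp add: supp_def)

lemma nsq_superset:
  assumes "finite S" "supp x \<subseteq> S"
  shows "nsq x = (\<Sum>i\<in>S. (cmod (x i))\<^sup>2)"
  unfolding nsq_def
  by (rule sum.mono_neutral_left) (use assms in \<open>auto simp: supp_def\<close>)

lemma form_superset:
  assumes "finite S" "finite T" "supp \<eta> \<subseteq> S" "supp \<xi> \<subseteq> T"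
  shows "mat_form A \<xi> \<eta> = (\<Sum>s\<in>S. \<Sum>t\<in>T. cnj (\<eta> s) * A s t * \<xi> t)"
proof -
  have "mat_form A \<xi> \<eta> = (\<Sum>s\<in>supp \<eta>. \<Sum>t\<in>T. cnj (\<eta> s) * A s t * \<xi> t)"
    unfolding mat_form_def
    by (intro sum.cong refl sum.mono_neutral_left) (use assms in \<open>auto simp: supp_def\<close>)
  also have "\<dots> = (\<Sum>s\<in>S. \<Sum>t\<in>T. cnj (\<eta> s) * A s t * \<xi> t)"
    by (rule sum.mono_neutral_left) (use assms in \<open>auto simp: supp_def\<close>)
  finally show ?thesis .
qed

lemma fin_vec_zero: "fin_vec (\<lambda>_. 0)"
  by (simp add: fin_vec_def supp_def)

lemma l2norm_zero_vec: "l2norm (\<lambda>_. 0) = 0"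
  by (simp add: l2norm_def supp_def)

lemma form_zero_left: "supp \<xi> = {} \<Longrightarrow> mat_form A \<xi> \<eta> = 0"
  by (simp add: mat_form_def)
lemma form_zero_right: "supp \<eta> = {} \<Longrightarrow> mat_form A \<xi> \<eta> = 0"
  by (simp add: mat_form_def)

lemma l2norm_eq0: assumes "fin_vec x" "l2norm x = 0" shows "supp x = {}"
proof -
  have "nsq x = 0" using assms(2) l2norm_sq[of x] by simp
  then have "\<forall>i\<in>supp x. (cmod (x i))\<^sup>2 = 0"
    using assms(1) unfolding nsq_def fin_vec_def
    by (subst (asm) sum_nonneg_eq_0_iff) auto
  then show ?thesis by (auto simp: supp_def)
qed

lemma supp_scale_sub: "supp (\<lambda>i. c * x i) \<subseteq> supp x"
  by (auto simp: supp_def)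

lemma supp_scale: "c \<noteq> 0 \<Longrightarrow> supp (\<lambda>i. c * x i) = supp x"
  by (auto simp: supp_def)

lemma fin_vec_scale: "fin_vec x \<Longrightarrow> fin_vec (\<lambda>i. c * x i)"
  unfolding fin_vec_def using supp_scale_sub[of c x] finite_subset by blast

lemma nsq_scale: assumes "fin_vec x" shows "nsq (\<lambda>i. c * x i) = (cmod c)\<^sup>2 * nsq x"
proof -
  have "nsq (\<lambda>i. c * x i) = (\<Sum>i\<in>supp x. (cmod (c * x i))\<^sup>2)"
    by (rule nsq_superset) (use assms supp_scale_sub[of c x] in \<open>auto simp: fin_vec_def\<close>)
  also have "\<dots> = (cmod c)\<^sup>2 * nsq x"
    by (simp add: nsq_def sum_distrib_left norm_mult power_mult_distrib)
  finally show ?thesis .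
qed

lemma l2norm_scale: assumes "fin_vec x" shows "l2norm (\<lambda>i. c * x i) = cmod c * l2norm x"
  by (simp add: l2norm_nsq nsq_scale[OF assms] real_sqrt_mult)

lemma form_scale:
  assumes "fin_vec \<xi>" "fin_vec \<eta>"
  shows "mat_form A (\<lambda>i. a * \<xi> i) (\<lambda>i. b * \<eta> i) = a * cnj b * mat_form A \<xi> \<eta>"
proof -
  have "mat_form A (\<lambda>i. a * \<xi> i) (\<lambda>i. b * \<eta> i) =
     (\<Sum>s\<in>supp \<eta>. \<Sum>t\<in>supp \<xi>. cnj (b * \<eta> s) * A s t * (a * \<xi> t))"
    by (rule form_superset) (use assms supp_scale_sub[of a \<xi>] supp_scale_sub[of b \<eta>] in \<open>auto simp: fin_vec_def\<close>)
  also have "\<dots> = a * cnj b * mat_form A \<xi> \<eta>"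
    unfolding mat_form_def sum_distrib_left by (intro sum.cong refl) (simp add: algebra_simps)
  finally show ?thesis .
qed

lemma homog:
  assumes H: "\<And>\<xi> \<eta>. fin_vec \<xi> \<Longrightarrow> fin_vec \<eta> \<Longrightarrow> l2norm \<xi> \<le> 1 \<Longrightarrow> l2norm \<eta> \<le> 1 \<Longrightarrow>
      cmod (mat_form A \<xi> \<eta>) \<le> R"
    and f: "fin_vec \<xi>" "fin_vec \<eta>"
  shows "cmod (mat_form A \<xi> \<eta>) \<le> R * l2norm \<xi> * l2norm \<eta>"
proof (cases "l2norm \<xi> = 0 \<or> l2norm \<eta> = 0")
  case True
  then have "mat_form A \<xi> \<eta> = 0"
    using l2norm_eq0 f form_zero_left form_zero_right by metis
  then show ?thesis using True by auto
next
  case False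
  define a where "a = complex_of_real (1 / l2norm \<xi>)"
  define b where "b = complex_of_real (1 / l2norm \<eta>)"
  have pa: "0 < l2norm \<xi>" "0 < l2norm \<eta>" using False l2norm_nonneg by (auto simp: order_le_less)
  have ca: "cmod a = 1 / l2norm \<xi>" "cmod b = 1 / l2norm \<eta>" using pa unfolding a_def b_def norm_of_real by auto
  have "cmod (mat_form A (\<lambda>i. a * \<xi> i) (\<lambda>i. b * \<eta> i)) \<le> R"
  proof (rule H)
    show "fin_vec (\<lambda>i. a * \<xi> i)" "fin_vec (\<lambda>i. b * \<eta> i)"
      using f by (auto intro: fin_vec_scale)
    have "l2norm (\<lambda>i. a * \<xi> i) = 1 / l2norm \<xi> * l2norm \<xi>"
      by (simp only: l2norm_scale[OF f(1)] ca)
    then show "l2norm (\<lambda>i. a * \<xi> i) \<le> 1" using pa by simp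
    have "l2norm (\<lambda>i. b * \<eta> i) = 1 / l2norm \<eta> * l2norm \<eta>"
      by (simp only: l2norm_scale[OF f(2)] ca)
    then show "l2norm (\<lambda>i. b * \<eta> i) \<le> 1" using pa by simp
  qed
  also have "cmod (mat_form A (\<lambda>i. a * \<xi> i) (\<lambda>i. b * \<eta> i)) =
      cmod (mat_form A \<xi> \<eta>) / (l2norm \<xi> * l2norm \<eta>)"
    by (simp only: form_scale f norm_mult complex_mod_cnj ca) simp
  finally show ?thesis using pa by (simp add: divide_le_eq mult.assoc)
qed

definition unitset :: "('i \<Rightarrow> 'i \<Rightarrow> complex) \<Rightarrow> real set" where
  "unitset A = {cmod (mat_form A \<xi> \<eta>) | \<xi> \<eta>.
      fin_vec \<xi> \<and> fin_vec \<eta> \<and> l2norm \<xi> \<le> 1 \<and> l2norm \<eta> \<le> 1}"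

lemma mat_norm_unitset: "mat_norm A = Sup (unitset A)"
  by (simp add: mat_norm_def unitset_def)

lemma unitset_ne: "0 \<in> unitset A"
  unfolding unitset_def
  by (rule CollectI, rule exI[of _ "\<lambda>_. 0"], rule exI[of _ "\<lambda>_. 0"])
     (simp add: fin_vec_zero l2norm_zero_vec mat_form_def supp_def)

lemma unitset_bdd: assumes "mat_bounded A" shows "bdd_above (unitset A)"
proof -
  obtain C where C: "\<forall>\<xi> \<eta>. fin_vec \<xi> \<longrightarrow> fin_vec \<eta> \<longrightarrow>
      cmod (mat_form A \<xi> \<eta>) \<le> C * l2norm \<xi> * l2norm \<eta>"
    using assms by (auto simp: mat_bounded_def)
  have "z \<le> max C 0" if zin: "z \<in> unitset A" for z
  proof -
    obtain \<xi> \<eta> where z: "z = cmod (mat_form A \<xi> \<eta>)" "fin_vec \<xi>" "fin_vec \<eta>"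
      "l2norm \<xi> \<le> 1" "l2norm \<eta> \<le> 1"
      using zin unfolding unitset_def by blast
    have "z \<le> C * l2norm \<xi> * l2norm \<eta>" using C z by auto
    also have "\<dots> \<le> max C 0 * l2norm \<xi> * l2norm \<eta>"
      by (intro mult_right_mono) (auto simp: l2norm_nonneg)
    also have "\<dots> \<le> max C 0 * 1 * 1"
      using z by (intro mult_mono) (auto simp: l2norm_nonneg)
    finally show ?thesis by simp
  qed
  then show ?thesis by (auto simp: bdd_above_def)
qed

lemma mat_norm_nonneg: "mat_bounded A \<Longrightarrow> 0 \<le> mat_norm A"
  unfolding mat_norm_unitset by (rule cSup_upper[OF unitset_ne unitset_bdd])

lemma N1:
  assumes "mat_bounded A" "fin_vec \<xi>" "fin_vec \<eta>"
  shows "cmod (mat_form A \<xi> \<eta>) \<le> mat_norm A * l2norm \<xi> * l2norm \<eta>"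
proof (rule homog[OF _ assms(2,3)])
  fix x y :: "'a \<Rightarrow> complex" assume "fin_vec x" "fin_vec y" "l2norm x \<le> 1" "l2norm y \<le> 1"
  then have "cmod (mat_form A x y) \<in> unitset A" unfolding unitset_def by blast
  then show "cmod (mat_form A x y) \<le> mat_norm A"
    unfolding mat_norm_unitset by (rule cSup_upper[OF _ unitset_bdd[OF assms(1)]])
qed

lemma N2:
  assumes R: "0 \<le> R"
    and H: "\<And>\<xi> \<eta>. fin_vec \<xi> \<Longrightarrow> fin_vec \<eta> \<Longrightarrow>
      cmod (mat_form A \<xi> \<eta>) \<le> R * l2norm \<xi> * l2norm \<eta>"
  shows "mat_bounded A" "mat_norm A \<le> R"
proof -
  show "mat_bounded A" unfolding mat_bounded_def using H by blast
  have "z \<le> R" if zin: "z \<in> unitset A" for z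
  proof -
    obtain \<xi> \<eta> where z: "z = cmod (mat_form A \<xi> \<eta>)" "fin_vec \<xi>" "fin_vec \<eta>"
      "l2norm \<xi> \<le> 1" "l2norm \<eta> \<le> 1"
      using zin unfolding unitset_def by blast
    have "z \<le> R * l2norm \<xi> * l2norm \<eta>" using H z by auto
    also have "\<dots> \<le> R * 1 * 1"
      using z R by (intro mult_mono) (auto simp: l2norm_nonneg)
    finally show ?thesis by simp
  qed
  then show "mat_norm A \<le> R"
    unfolding mat_norm_unitset using unitset_ne by (intro cSup_least) auto
qed

lemma cs_sqrt:
  fixes a b :: "'a \<Rightarrow> real"
  shows "(\<Sum>i\<in>I. a i * b i) \<le> sqrt (\<Sum>i\<in>I. (a i)\<^sup>2) * sqrt (\<Sum>i\<in>I. (b i)\<^sup>2)"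
proof -
  have "(\<Sum>i\<in>I. a i * b i) \<le> sqrt ((\<Sum>i\<in>I. a i * b i)\<^sup>2)" by simp
  also have "\<dots> \<le> sqrt ((\<Sum>i\<in>I. (a i)\<^sup>2) * (\<Sum>i\<in>I. (b i)\<^sup>2))"
    by (rule real_sqrt_le_mono[OF Cauchy_Schwarz_ineq_sum])
  finally show ?thesis by (simp add: real_sqrt_mult)
qed

lemma sum_inj_supp_le:
  fixes w :: "complex \<Rightarrow> real"
  assumes "finite D" "inj_on p D" "finite (supp X)" "\<And>z. 0 \<le> w z" "w 0 = 0"
  shows "(\<Sum>d\<in>D. w (X (p d))) \<le> (\<Sum>g\<in>supp X. w (X g))"
proof -
  have "(\<Sum>d\<in>D. w (X (p d))) = (\<Sum>g\<in>p ` D. w (X g))"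
    using sum.reindex[OF assms(2), of "\<lambda>g. w (X g)"] by simp
  also have "\<dots> = (\<Sum>g\<in>p ` D \<inter> supp X. w (X g))"
    by (rule sum.mono_neutral_right) (use assms in \<open>auto simp: supp_def\<close>)
  also have "\<dots> \<le> (\<Sum>g\<in>supp X. w (X g))"
    by (rule sum_mono2) (auto simp: assms(3,4))
  finally show ?thesis .
qed



lemma sqrt_split: "0 \<le> (y::real) \<Longrightarrow> x * y * z = (x * sqrt y) * (sqrt y * z)"
proof -
  assume "0 \<le> y"
  then have "sqrt y * sqrt y = y" by simp
  then show ?thesis by (metis mult.assoc mult.commute)
qed

lemma sum_le_supp:
  fixes f :: "'a \<Rightarrow> real"
  assumes "finite T" "finite Z" "\<And>q. 0 \<le> f q" "\<And>q. f q \<noteq> 0 \<Longrightarrow> q \<in> Z"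
  shows "(\<Sum>q\<in>T. f q) \<le> (\<Sum>q\<in>Z. f q)"
proof -
  have "(\<Sum>q\<in>T. f q) = (\<Sum>q\<in>T \<inter> Z. f q)"
    by (rule sum.mono_neutral_right) (use assms in auto)
  also have "\<dots> \<le> (\<Sum>q\<in>Z. f q)"
    by (rule sum_mono2) (use assms in auto)
  finally show ?thesis .
qed

lemma form_abs_bound:
  "cmod (mat_form M \<xi> \<eta>) \<le> (\<Sum>s\<in>supp \<eta>. \<Sum>t\<in>supp \<xi>. cmod (\<eta> s) * cmod (M s t) * cmod (\<xi> t))"
  unfolding mat_form_def
  by (rule order_trans[OF norm_sum], rule sum_mono, rule order_trans[OF norm_sum]) (simp add: norm_mult)

lemma schur_test:
  assumes Rw: "\<And>s T. finite T \<Longrightarrow> (\<Sum>t\<in>T. cmod (M s t)) \<le> R"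
    and Cl: "\<And>t S. finite S \<Longrightarrow> (\<Sum>s\<in>S. cmod (M s t)) \<le> R"
  shows "mat_bounded M"
proof -
  have R0: "0 \<le> R" using Rw[of "{}"] by simp
  have "cmod (mat_form M \<xi> \<eta>) \<le> R * l2norm \<xi> * l2norm \<eta>" if f: "fin_vec \<xi>" "fin_vec \<eta>" for \<xi> \<eta>
  proof -
    define S where "S = supp \<eta>"
    define T where "T = supp \<xi>"
    have fS: "finite S" "finite T" using f by (auto simp: S_def T_def fin_vec_def)
    define a where "a = (\<lambda>p. cmod (\<eta> (fst p)) * sqrt (cmod (M (fst p) (snd p))))"
    define b where "b = (\<lambda>p. sqrt (cmod (M (fst p) (snd p))) * cmod (\<xi> (snd p)))"
    have "cmod (mat_form M \<xi> \<eta>) \<le> (\<Sum>s\<in>S. \<Sum>t\<in>T. cmod (\<eta> s) * cmod (M s t) * cmod (\<xi> t))"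
      unfolding S_def T_def by (rule form_abs_bound)
    also have "\<dots> = (\<Sum>p\<in>S \<times> T. a p * b p)"
      unfolding sum.cartesian_product a_def b_def
      by (intro sum.cong refl) (auto intro: sqrt_split)
    also have "\<dots> \<le> sqrt (\<Sum>p\<in>S \<times> T. (a p)\<^sup>2) * sqrt (\<Sum>p\<in>S \<times> T. (b p)\<^sup>2)"
      by (rule cs_sqrt)
    also have "\<dots> \<le> sqrt (R * nsq \<eta>) * sqrt (R * nsq \<xi>)"
    proof (intro mult_mono real_sqrt_le_mono)
      have "(\<Sum>p\<in>S \<times> T. (a p)\<^sup>2) = (\<Sum>s\<in>S. (cmod (\<eta> s))\<^sup>2 * (\<Sum>t\<in>T. cmod (M s t)))"
        unfolding sum.cartesian_product' a_def sum_distrib_left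
        by (intro sum.cong refl) (simp add: power_mult_distrib)
      also have "\<dots> \<le> (\<Sum>s\<in>S. (cmod (\<eta> s))\<^sup>2 * R)"
        by (intro sum_mono mult_left_mono Rw fS) simp
      also have "\<dots> = R * nsq \<eta>"
        by (simp add: nsq_def S_def sum_distrib_left sum_distrib_right mult.commute)
      finally show "(\<Sum>p\<in>S \<times> T. (a p)\<^sup>2) \<le> R * nsq \<eta>" .
      have "(\<Sum>p\<in>S \<times> T. (b p)\<^sup>2) = (\<Sum>t\<in>T. (cmod (\<xi> t))\<^sup>2 * (\<Sum>s\<in>S. cmod (M s t)))"
        unfolding sum.cartesian_product' b_def sum_distrib_left
        by (subst sum.swap) (intro sum.cong refl, simp add: power_mult_distrib mult.commute)
      also have "\<dots> \<le> (\<Sum>t\<in>T. (cmod (\<xi> t))\<^sup>2 * R)"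
        by (intro sum_mono mult_left_mono Cl fS) simp
      also have "\<dots> = R * nsq \<xi>"
        by (simp add: nsq_def T_def sum_distrib_left sum_distrib_right mult.commute)
      finally show "(\<Sum>p\<in>S \<times> T. (b p)\<^sup>2) \<le> R * nsq \<xi>" .
    qed (auto simp: R0 nsq_nonneg sum_nonneg)
    also have "\<dots> = R * l2norm \<xi> * l2norm \<eta>"
      using R0 by (simp add: l2norm_nsq real_sqrt_mult)
    finally show ?thesis .
  qed
  then show ?thesis using N2(1)[OF R0] by blast
qed

definition restr :: "('i \<Rightarrow> complex) \<Rightarrow> 'i set \<Rightarrow> 'i \<Rightarrow> complex" where
  "restr x T = (\<lambda>t. if t \<in> T then x t else 0)"

lemma supp_restr: "supp (restr x T) \<subseteq> supp x"
  by (auto simp: supp_def restr_def)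

lemma fin_restr: "fin_vec x \<Longrightarrow> fin_vec (restr x T)"
  unfolding fin_vec_def using supp_restr[of x T] finite_subset by blast

lemma nsq_restr: assumes "fin_vec x" shows "nsq (restr x T) \<le> nsq x"
proof -
  have "nsq (restr x T) = (\<Sum>i\<in>supp x. (cmod (restr x T i))\<^sup>2)"
    by (rule nsq_superset) (use assms supp_restr[of x T] in \<open>auto simp: fin_vec_def\<close>)
  also have "\<dots> \<le> nsq x" unfolding nsq_def by (intro sum_mono) (auto simp: restr_def)
  finally show ?thesis .
qed

lemma l2norm_restr: "fin_vec x \<Longrightarrow> l2norm (restr x T) \<le> l2norm x"
  by (simp add: l2norm_nsq nsq_restr)

lemma form_restr:
  assumes "fin_vec \<xi>" "fin_vec \<eta>" "\<And>s t. M s t \<noteq> 0 \<Longrightarrow> s \<in> S \<and> t \<in> T"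
  shows "mat_form M \<xi> \<eta> = mat_form M (restr \<xi> T) (restr \<eta> S)"
proof -
  have "mat_form M (restr \<xi> T) (restr \<eta> S) =
      (\<Sum>s\<in>supp \<eta>. \<Sum>t\<in>supp \<xi>. cnj (restr \<eta> S s) * M s t * restr \<xi> T t)"
    by (rule form_superset) (use assms supp_restr[of \<xi> T] supp_restr[of \<eta> S] in \<open>auto simp: fin_vec_def\<close>)
  also have "\<dots> = mat_form M \<xi> \<eta>"
    unfolding mat_form_def by (intro sum.cong refl) (auto simp: restr_def dest: assms(3))
  finally show ?thesis by simp
qed

lemma form_restr_mat:
  assumes "fin_vec \<xi>" "fin_vec \<eta>"
  shows "mat_form (\<lambda>s t. if s \<in> S \<and> t \<in> T then A s t else 0) \<xi> \<eta> = mat_form A (restr \<xi> T) (restr \<eta> S)"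
proof -
  have "mat_form A (restr \<xi> T) (restr \<eta> S) =
      (\<Sum>s\<in>supp \<eta>. \<Sum>t\<in>supp \<xi>. cnj (restr \<eta> S s) * A s t * restr \<xi> T t)"
    by (rule form_superset) (use assms supp_restr[of \<xi> T] supp_restr[of \<eta> S] in \<open>auto simp: fin_vec_def\<close>)
  also have "\<dots> = mat_form (\<lambda>s t. if s \<in> S \<and> t \<in> T then A s t else 0) \<xi> \<eta>"
    unfolding mat_form_def by (intro sum.cong refl) (auto simp: restr_def)
  finally show ?thesis by simp
qed

definition delta :: "'i \<Rightarrow> 'i \<Rightarrow> complex" where
  "delta a = (\<lambda>x. if x = a then 1 else 0)"

lemma supp_delta: "supp (delta a) = {a}" by (auto simp: supp_def delta_def)

lemma entry_bound: assumes "mat_bounded A" shows "cmod (A s t) \<le> mat_norm A"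
proof -
  have f: "fin_vec (delta a)" for a :: 'a by (simp add: fin_vec_def supp_delta)
  have n: "l2norm (delta a) = 1" for a :: 'a unfolding l2norm_def supp_delta by (simp add: delta_def)
  have "mat_form A (delta t) (delta s) = A s t"
    unfolding mat_form_def supp_delta by (simp add: delta_def)
  then show ?thesis using N1[OF assms f f, of t s] n by simp
qed



lemma block_val: "block_mat \<sigma> n C (i, h) (j, k) =
   (if i < n \<and> j < n then C i j (h + - k) * \<sigma> (h + - k) k else 0)"
  by (simp add: block_mat_def tw_mat_def)

lemma grp1: "h - (- x + h) = (x::'g::group_add)"
  by (simp add: diff_conv_add_uminus minus_add add.assoc)

lemma inj_left_sub: "inj_on (\<lambda>k. (h::'g::group_add) + - k) T"
  unfolding inj_on_def by (metis add_left_cancel neg_equal_iff_equal)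
lemma inj_right_sub: "inj_on (\<lambda>h. h + - (k::'g::group_add)) T"
  unfolding inj_on_def by (metis add_right_cancel)

lemma tw_bounded:
  fixes \<sigma> :: "'g::group_add \<Rightarrow> 'g \<Rightarrow> complex"
  assumes s: "\<forall>g h. cmod (\<sigma> g h) = 1" and c: "fin_vec c"
  shows "mat_bounded (tw_mat \<sigma> c)"
proof (rule schur_test)
  have fc: "finite (supp c)" using c by (simp add: fin_vec_def)
  fix s :: 'g and T :: "'g set" assume "finite T"
  have "(\<Sum>t\<in>T. cmod (tw_mat \<sigma> c s t)) = (\<Sum>t\<in>T. cmod (c (s + - t)))"
    by (simp add: tw_mat_def norm_mult s)
  also have "\<dots> \<le> (\<Sum>g\<in>supp c. cmod (c g))"
    by (rule sum_inj_supp_le[OF \<open>finite T\<close> inj_left_sub fc]) auto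
  finally show "(\<Sum>t\<in>T. cmod (tw_mat \<sigma> c s t)) \<le> (\<Sum>g\<in>supp c. cmod (c g))" .
next
  have fc: "finite (supp c)" using c by (simp add: fin_vec_def)
  fix t :: 'g and S :: "'g set" assume "finite S"
  have "(\<Sum>s\<in>S. cmod (tw_mat \<sigma> c s t)) = (\<Sum>s\<in>S. cmod (c (s + - t)))"
    by (simp add: tw_mat_def norm_mult s)
  also have "\<dots> \<le> (\<Sum>g\<in>supp c. cmod (c g))"
    by (rule sum_inj_supp_le[OF \<open>finite S\<close> inj_right_sub fc]) auto
  finally show "(\<Sum>s\<in>S. cmod (tw_mat \<sigma> c s t)) \<le> (\<Sum>g\<in>supp c. cmod (c g))" .
qed

lemma block_bounded:
  fixes \<sigma> :: "'g::group_add \<Rightarrow> 'g \<Rightarrow> complex"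
  assumes s: "\<forall>g h. cmod (\<sigma> g h) = 1" and c: "\<forall>i j. fin_vec (C i j)"
  shows "mat_bounded (block_mat \<sigma> n C)"
proof -
  define R where "R = (\<Sum>i<n. \<Sum>j<n. \<Sum>g\<in>supp (C i j). cmod (C i j g))"
  have fc: "finite (supp (C i j))" for i j using c by (simp add: fin_vec_def)
  have R0: "0 \<le> (\<Sum>g\<in>supp (C i j). cmod (C i j g))" for i j by (simp add: sum_nonneg)
  show ?thesis
  proof (rule schur_test[where R = R])
    fix p :: "nat \<times> 'g" and T :: "(nat \<times> 'g) set" assume fT: "finite T"
    obtain i h where p: "p = (i, h)" by (cases p)
    show "(\<Sum>q\<in>T. cmod (block_mat \<sigma> n C p q)) \<le> R"
    proof (cases "i < n")
      case False
      then have "(\<Sum>q\<in>T. cmod (block_mat \<sigma> n C p q)) = 0"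
        by (intro sum.neutral) (auto simp: p block_val split: prod.splits)
      then show ?thesis by (simp add: R_def sum_nonneg)
    next
      case True
      define Z where "Z = Sigma {..<n} (\<lambda>j. (\<lambda>g. - g + h) ` supp (C i j))"
      have fZ: "finite Z" unfolding Z_def using fc by auto
      have "(\<Sum>q\<in>T. cmod (block_mat \<sigma> n C p q)) \<le> (\<Sum>q\<in>Z. cmod (block_mat \<sigma> n C p q))"
      proof (rule sum_le_supp[OF fT fZ])
        fix q assume q: "cmod (block_mat \<sigma> n C p q) \<noteq> 0"
        obtain j k where qq: "q = (j, k)" by (cases q)
        have jn: "j < n" and nz: "C i j (h + - k) \<noteq> 0" using q by (auto simp: p qq block_val split: if_splits)
        have "k = - (h + - k) + h" by (simp add: minus_add add.assoc)
        moreover have "h + - k \<in> supp (C i j)" using nz by (simp add: supp_def)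
        ultimately have "k \<in> (\<lambda>g. - g + h) ` supp (C i j)" by (rule image_eqI)
        then show "q \<in> Z" using jn by (simp add: Z_def qq)
      qed simp
      also have "\<dots> = (\<Sum>(j,k)\<in>Z. cmod (C i j (h + - k)))"
        by (intro sum.cong refl) (auto simp: Z_def p block_val norm_mult s True split: prod.splits)
      also have "\<dots> = (\<Sum>j<n. \<Sum>k\<in>(\<lambda>g. - g + h) ` supp (C i j). cmod (C i j (h + - k)))"
        unfolding Z_def by (rule sum.Sigma[symmetric]) (use fc in auto)
      also have "\<dots> = (\<Sum>j<n. \<Sum>g\<in>supp (C i j). cmod (C i j g))"
      proof (rule sum.cong[OF refl])
        fix j
        have inj: "inj_on (\<lambda>g. - g + h) (supp (C i j))" by (auto simp: inj_on_def)
        show "(\<Sum>k\<in>(\<lambda>g. - g + h) ` supp (C i j). cmod (C i j (h + - k))) = (\<Sum>g\<in>supp (C i j). cmod (C i j g))"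
          by (simp add: sum.reindex[OF inj] grp1)
      qed
      also have "\<dots> \<le> R" unfolding R_def
        by (rule member_le_sum[where f = "\<lambda>i. \<Sum>j<n. \<Sum>g\<in>supp (C i j). cmod (C i j g)"])
           (use True in \<open>auto intro!: sum_nonneg\<close>)
      finally show ?thesis .
    qed
  next
    fix q :: "nat \<times> 'g" and S :: "(nat \<times> 'g) set" assume fS: "finite S"
    obtain j k where qq: "q = (j, k)" by (cases q)
    show "(\<Sum>p\<in>S. cmod (block_mat \<sigma> n C p q)) \<le> R"
    proof (cases "j < n")
      case False
      then have "(\<Sum>p\<in>S. cmod (block_mat \<sigma> n C p q)) = 0"
        by (intro sum.neutral) (auto simp: qq block_val split: prod.splits)
      then show ?thesis by (simp add: R_def sum_nonneg)
    next
      case True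
      define Z where "Z = Sigma {..<n} (\<lambda>i. (\<lambda>g. g + k) ` supp (C i j))"
      have fZ: "finite Z" unfolding Z_def using fc by auto
      have "(\<Sum>p\<in>S. cmod (block_mat \<sigma> n C p q)) \<le> (\<Sum>p\<in>Z. cmod (block_mat \<sigma> n C p q))"
      proof (rule sum_le_supp[OF fS fZ])
        fix p assume pz: "cmod (block_mat \<sigma> n C p q) \<noteq> 0"
        obtain i h where pp: "p = (i, h)" by (cases p)
        have jn: "i < n" and nz: "C i j (h + - k) \<noteq> 0" using pz by (auto simp: pp qq block_val split: if_splits)
        have "h = (h + - k) + k" by (simp add: add.assoc)
        moreover have "h + - k \<in> supp (C i j)" using nz by (simp add: supp_def)
        ultimately have "h \<in> (\<lambda>g. g + k) ` supp (C i j)" by (rule image_eqI)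
        then show "p \<in> Z" using jn by (simp add: Z_def pp)
      qed simp
      also have "\<dots> = (\<Sum>(i,h)\<in>Z. cmod (C i j (h + - k)))"
        by (intro sum.cong refl) (auto simp: Z_def qq block_val norm_mult s True split: prod.splits)
      also have "\<dots> = (\<Sum>i<n. \<Sum>h\<in>(\<lambda>g. g + k) ` supp (C i j). cmod (C i j (h + - k)))"
        unfolding Z_def by (rule sum.Sigma[symmetric]) (use fc in auto)
      also have "\<dots> = (\<Sum>i<n. \<Sum>g\<in>supp (C i j). cmod (C i j g))"
      proof (rule sum.cong[OF refl])
        fix i
        have inj: "inj_on (\<lambda>g. g + k) (supp (C i j))" by (auto simp: inj_on_def)
        show "(\<Sum>h\<in>(\<lambda>g. g + k) ` supp (C i j). cmod (C i j (h + - k))) = (\<Sum>g\<in>supp (C i j). cmod (C i j g))"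
          by (simp add: sum.reindex[OF inj] add.assoc)
      qed
      also have "\<dots> \<le> R" unfolding R_def
      proof (rule sum_mono)
        fix i assume "i \<in> {..<n}"
        show "(\<Sum>g\<in>supp (C i j). cmod (C i j g)) \<le> (\<Sum>j<n. \<Sum>g\<in>supp (C i j). cmod (C i j g))"
          by (rule member_le_sum[where f = "\<lambda>j. \<Sum>g\<in>supp (C i j). cmod (C i j g)"])
             (use True in \<open>auto intro!: sum_nonneg\<close>)
      qed
      finally show ?thesis .
    qed
  qed
qed




lemma supp_tr: "supp (\<lambda>s. x (s + g)) = (\<lambda>s. s + - g) ` supp (x :: 'g::group_add \<Rightarrow> complex)"
proof (intro equalityI subsetI)
  fix s assume a: "s \<in> supp (\<lambda>s. x (s + g))"
  have 1: "s + g \<in> supp x" using a by (simp add: supp_def)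
  have 2: "s = (s + g) + - g" by (simp add: add.assoc)
  show "s \<in> (\<lambda>s. s + - g) ` supp x"
  proof (rule image_eqI[where x="s + g"])
    show "s = s + g + - g" by (rule 2)
    show "s + g \<in> supp x" by (rule 1)
  qed
next
  fix s assume "s \<in> (\<lambda>s. s + - g) ` supp x"
  then obtain t where t: "t \<in> supp x" "s = t + - g" by blast
  then show "s \<in> supp (\<lambda>s. x (s + g))" by (simp add: supp_def add.assoc)
qed

lemma fin_tr: "fin_vec x \<Longrightarrow> fin_vec (\<lambda>s. x (s + (g::'g::group_add)))"
  by (simp add: fin_vec_def supp_tr)

lemma nsq_tr: "nsq (\<lambda>s. x (s + (g::'g::group_add))) = nsq x"
  unfolding nsq_def supp_tr
  by (subst sum.reindex[OF inj_right_sub]) (simp add: add.assoc)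

lemma l2norm_tr: "l2norm (\<lambda>s. x (s + (g::'g::group_add))) = l2norm x"
  by (simp add: l2norm_nsq nsq_tr)

lemma reindex_tr: "(\<Sum>s\<in>(\<lambda>s. s + - g) ` A. F s) = (\<Sum>s\<in>A. F (s + - (g::'g::group_add)))"
  by (simp only: sum.reindex[OF inj_right_sub] o_def)

lemma form_tr:
  fixes g :: "'g::group_add"
  shows "mat_form (\<lambda>s t. M (s + g) (t + g)) (\<lambda>s. \<xi> (s + g)) (\<lambda>s. \<eta> (s + g)) = mat_form M \<xi> \<eta>"
  unfolding mat_form_def supp_tr reindex_tr by (simp add: add.assoc)



definition colJ :: "('j \<times> 'i \<Rightarrow> complex) \<Rightarrow> 'j set" where
  "colJ X = fst ` supp X"
definition col0 :: "('j \<times> 'i \<Rightarrow> complex) \<Rightarrow> 'i \<Rightarrow> complex" where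
  "col0 X t = complex_of_real (sqrt (\<Sum>j\<in>colJ X. (cmod (X (j, t)))\<^sup>2))"
definition cold :: "('j \<times> 'i \<Rightarrow> complex) \<Rightarrow> 'j \<Rightarrow> 'i \<Rightarrow> complex" where
  "cold X j t = X (j, t) / col0 X t"
definition Dvec :: "('j \<times> 'i \<Rightarrow> complex) \<Rightarrow> ('i \<Rightarrow> complex) \<Rightarrow> 'j \<times> 'i \<Rightarrow> complex" where
  "Dvec X x = (\<lambda>(j, t). if j \<in> colJ X then cold X j t * x t else 0)"

lemma finJ: "fin_vec X \<Longrightarrow> finite (colJ X)"
  by (simp add: colJ_def fin_vec_def)

lemma col0_sq: "(cmod (col0 X t))\<^sup>2 = (\<Sum>j\<in>colJ X. (cmod (X (j, t)))\<^sup>2)"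
proof -
  have "0 \<le> (\<Sum>j\<in>colJ X. (cmod (X (j, t)))\<^sup>2)" by (simp add: sum_nonneg)
  then show ?thesis by (simp add: col0_def)
qed

lemma notJ: "j \<notin> colJ X \<Longrightarrow> X (j, t) = 0"
  by (force simp: colJ_def supp_def)

lemma decomp:
  assumes "fin_vec X"
  shows "X (j, t) = (if j \<in> colJ X then cold X j t * col0 X t else 0)"
proof (cases "j \<in> colJ X")
  case False then show ?thesis by (simp add: notJ)
next
  case True
  show ?thesis
  proof (cases "col0 X t = 0")
    case False then show ?thesis using True by (simp add: cold_def)
  next
    case z: True
    have "(\<Sum>j\<in>colJ X. (cmod (X (j, t)))\<^sup>2) = 0" using col0_sq[of X t] z by simp
    then have "\<forall>j\<in>colJ X. (cmod (X (j, t)))\<^sup>2 = 0"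
      by (subst (asm) sum_nonneg_eq_0_iff) (auto simp: finJ[OF assms])
    then show ?thesis using True z by simp
  qed
qed

lemma cold_sq: "(\<Sum>j\<in>colJ X. (cmod (cold X j t))\<^sup>2) \<le> 1"
proof (cases "col0 X t = 0")
  case True then show ?thesis by (simp add: cold_def)
next
  case False
  have "(\<Sum>j\<in>colJ X. (cmod (cold X j t))\<^sup>2) = (\<Sum>j\<in>colJ X. (cmod (X (j, t)))\<^sup>2) / (cmod (col0 X t))\<^sup>2"
    by (simp add: cold_def norm_divide power_divide sum_divide_distrib)
  also have "\<dots> = 1" using False by (simp add: col0_sq[symmetric])
  finally show ?thesis by simp
qed

lemma supp_col0: "supp (col0 X) \<subseteq> snd ` supp X"
proof
  fix t assume "t \<in> supp (col0 X)"
  then have "col0 X t \<noteq> 0" by (simp add: supp_def)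
  then have "(\<Sum>j\<in>colJ X. (cmod (X (j, t)))\<^sup>2) \<noteq> 0" unfolding col0_def by auto
  then have "\<exists>j\<in>colJ X. (cmod (X (j, t)))\<^sup>2 \<noteq> 0"
    using sum.neutral[of "colJ X" "\<lambda>j. (cmod (X (j, t)))\<^sup>2"] by blast
  then obtain j where "X (j, t) \<noteq> 0" by auto
  then have "(j, t) \<in> supp X" by (simp add: supp_def)
  then show "t \<in> snd ` supp X" by force
qed

lemma supp_sub_J: "supp X \<subseteq> colJ X \<times> snd ` supp X"
proof
  fix q assume q: "q \<in> supp X"
  show "q \<in> colJ X \<times> snd ` supp X"
    using imageI[OF q, of fst] imageI[OF q, of snd] unfolding colJ_def by (cases q) auto
qed

lemma fin_col0: "fin_vec X \<Longrightarrow> fin_vec (col0 X)"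
  unfolding fin_vec_def using supp_col0[of X] finite_subset by blast

lemma nsq_col0: assumes "fin_vec X" shows "nsq (col0 X) = nsq X"
proof -
  have fX: "finite (supp X)" using assms by (simp add: fin_vec_def)
  have "nsq (col0 X) = (\<Sum>t\<in>snd ` supp X. (cmod (col0 X t))\<^sup>2)"
    by (rule nsq_superset) (use fX supp_col0[of X] in auto)
  also have "\<dots> = (\<Sum>t\<in>snd ` supp X. \<Sum>j\<in>colJ X. (cmod (X (j, t)))\<^sup>2)"
    by (simp add: col0_sq)
  also have "\<dots> = (\<Sum>j\<in>colJ X. \<Sum>t\<in>snd ` supp X. (cmod (X (j, t)))\<^sup>2)"
    by (rule sum.swap)
  also have "\<dots> = (\<Sum>q\<in>colJ X \<times> snd ` supp X. (cmod (X q))\<^sup>2)"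
    by (simp add: sum.cartesian_product)
  also have "\<dots> = nsq X"
    by (rule nsq_superset[symmetric]) (use fX finJ[OF assms] supp_sub_J[of X] in auto)
  finally show ?thesis .
qed

lemma l2norm_col0: "fin_vec X \<Longrightarrow> l2norm (col0 X) = l2norm X"
  by (simp add: l2norm_nsq nsq_col0)

lemma supp_Dvec: "supp (Dvec X x) \<subseteq> colJ X \<times> supp x"
  by (auto simp: supp_def Dvec_def split: if_splits)

lemma fin_Dvec: "fin_vec X \<Longrightarrow> fin_vec x \<Longrightarrow> fin_vec (Dvec X x)"
  unfolding fin_vec_def using supp_Dvec[of X x] finJ[unfolded fin_vec_def, of X]
  by (meson finite_SigmaI finite_subset)

lemma nsq_Dvec: assumes "fin_vec X" "fin_vec x" shows "nsq (Dvec X x) \<le> nsq x"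
proof -
  have fJ: "finite (colJ X)" using finJ[OF assms(1)] .
  have fx: "finite (supp x)" using assms(2) by (simp add: fin_vec_def)
  have "nsq (Dvec X x) = (\<Sum>q\<in>colJ X \<times> supp x. (cmod (Dvec X x q))\<^sup>2)"
    by (rule nsq_superset) (use fJ fx supp_Dvec[of X x] in auto)
  also have "\<dots> = (\<Sum>j\<in>colJ X. \<Sum>t\<in>supp x. (cmod (cold X j t))\<^sup>2 * (cmod (x t))\<^sup>2)"
    by (simp add: sum.cartesian_product' Dvec_def norm_mult power_mult_distrib)
  also have "\<dots> = (\<Sum>t\<in>supp x. (cmod (x t))\<^sup>2 * (\<Sum>j\<in>colJ X. (cmod (cold X j t))\<^sup>2))"
    by (subst sum.swap) (simp add: sum_distrib_left mult.commute)
  also have "\<dots> \<le> (\<Sum>t\<in>supp x. (cmod (x t))\<^sup>2 * 1)"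
    by (intro sum_mono mult_left_mono cold_sq) simp
  also have "\<dots> = nsq x" by (simp add: nsq_def)
  finally show ?thesis .
qed

lemma l2norm_Dvec: "fin_vec X \<Longrightarrow> fin_vec x \<Longrightarrow> l2norm (Dvec X x) \<le> l2norm x"
  by (simp add: l2norm_nsq nsq_Dvec)

lemma swap4:
  "(\<Sum>p\<in>I \<times> S. \<Sum>q\<in>J \<times> T. F (fst p) (snd p) (fst q) (snd q)) =
   (\<Sum>s\<in>S. \<Sum>t\<in>T. \<Sum>i\<in>I. \<Sum>j\<in>J. F i s j t)"
proof -
  have "(\<Sum>p\<in>I \<times> S. \<Sum>q\<in>J \<times> T. F (fst p) (snd p) (fst q) (snd q)) =
      (\<Sum>i\<in>I. \<Sum>s\<in>S. \<Sum>j\<in>J. \<Sum>t\<in>T. F i s j t)"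
    by (simp add: sum.cartesian_product')
  also have "\<dots> = (\<Sum>s\<in>S. \<Sum>i\<in>I. \<Sum>j\<in>J. \<Sum>t\<in>T. F i s j t)"
    by (rule sum.swap)
  also have "\<dots> = (\<Sum>s\<in>S. \<Sum>t\<in>T. \<Sum>i\<in>I. \<Sum>j\<in>J. F i s j t)"
  proof (rule sum.cong[OF refl])
    fix s
    have "(\<Sum>i\<in>I. \<Sum>j\<in>J. \<Sum>t\<in>T. F i s j t) = (\<Sum>i\<in>I. \<Sum>t\<in>T. \<Sum>j\<in>J. F i s j t)"
      by (rule sum.cong[OF refl]) (rule sum.swap)
    also have "\<dots> = (\<Sum>t\<in>T. \<Sum>i\<in>I. \<Sum>j\<in>J. F i s j t)"
      by (rule sum.swap)
    finally show "(\<Sum>i\<in>I. \<Sum>j\<in>J. \<Sum>t\<in>T. F i s j t) = (\<Sum>t\<in>T. \<Sum>i\<in>I. \<Sum>j\<in>J. F i s j t)" .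
  qed
  finally show ?thesis .
qed

lemma expand4:
  "(\<Sum>s\<in>S. \<Sum>t\<in>T. a s * (\<Sum>i\<in>I. \<Sum>j\<in>J. f s t i j) * b t) =
   (\<Sum>s\<in>S. \<Sum>t\<in>T. \<Sum>i\<in>I. \<Sum>j\<in>J. a s * f s t i j * (b t :: complex))"
  by (simp add: sum_distrib_left sum_distrib_right)

definition smithB :: "(('j \<times> 'i) \<Rightarrow> ('j \<times> 'i) \<Rightarrow> complex) \<Rightarrow> ('j \<times> 'i \<Rightarrow> complex) \<Rightarrow> ('j \<times> 'i \<Rightarrow> complex) \<Rightarrow> 'i \<Rightarrow> 'i \<Rightarrow> complex" where
  "smithB Mb X Y = (\<lambda>s t. \<Sum>i\<in>colJ Y. \<Sum>j\<in>colJ X. cnj (cold Y i s) * Mb (i, s) (j, t) * cold X j t)"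

lemma smith_form_B:
  assumes "fin_vec X" "fin_vec Y" "fin_vec x" "fin_vec y"
  shows "mat_form (smithB Mb X Y) x y = mat_form Mb (Dvec X x) (Dvec Y y)"
proof -
  have fJ: "finite (colJ X)" "finite (colJ Y)" using finJ assms by auto
  have fx: "finite (supp x)" "finite (supp y)" using assms by (auto simp: fin_vec_def)
  have "mat_form Mb (Dvec X x) (Dvec Y y) =
     (\<Sum>p\<in>colJ Y \<times> supp y. \<Sum>q\<in>colJ X \<times> supp x. cnj (Dvec Y y p) * Mb p q * Dvec X x q)"
    by (rule form_superset) (use fJ fx supp_Dvec in auto)
  also have "\<dots> = (\<Sum>s\<in>supp y. \<Sum>t\<in>supp x. \<Sum>i\<in>colJ Y. \<Sum>j\<in>colJ X.
        cnj (Dvec Y y (i, s)) * Mb (i, s) (j, t) * Dvec X x (j, t))"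
    using swap4[of "\<lambda>i s j t. cnj (Dvec Y y (i, s)) * Mb (i, s) (j, t) * Dvec X x (j, t)"] by simp
  also have "\<dots> = (\<Sum>s\<in>supp y. \<Sum>t\<in>supp x. \<Sum>i\<in>colJ Y. \<Sum>j\<in>colJ X.
        cnj (y s) * (cnj (cold Y i s) * Mb (i, s) (j, t) * cold X j t) * x t)"
    by (intro sum.cong refl) (simp add: Dvec_def)
  also have "\<dots> = mat_form (smithB Mb X Y) x y"
    unfolding mat_form_def smithB_def by (rule expand4[symmetric])
  finally show ?thesis by simp
qed

lemma smith:
  fixes Mb :: "('j \<times> 'i) \<Rightarrow> ('j \<times> 'i) \<Rightarrow> complex"
  assumes Mb: "mat_bounded Mb" and fX: "fin_vec X" and fY: "fin_vec Y"
  shows "mat_bounded (smithB Mb X Y)" "mat_norm (smithB Mb X Y) \<le> mat_norm Mb"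
    "mat_form (\<lambda>p q. K (snd p) (snd q) * Mb p q) X Y = mat_form (\<lambda>s t. K s t * smithB Mb X Y s t) (col0 X) (col0 Y)"
proof -
  have N0: "0 \<le> mat_norm Mb" using mat_norm_nonneg[OF Mb] .
  have "cmod (mat_form (smithB Mb X Y) x y) \<le> mat_norm Mb * l2norm x * l2norm y"
    if fx: "fin_vec x" "fin_vec y" for x y
  proof -
    have "cmod (mat_form (smithB Mb X Y) x y) = cmod (mat_form Mb (Dvec X x) (Dvec Y y))"
      by (simp add: smith_form_B fX fY fx)
    also have "\<dots> \<le> mat_norm Mb * l2norm (Dvec X x) * l2norm (Dvec Y y)"
      by (rule N1[OF Mb fin_Dvec[OF fX fx(1)] fin_Dvec[OF fY fx(2)]])
    also have "\<dots> \<le> mat_norm Mb * l2norm x * l2norm y"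
      using N0 l2norm_Dvec[OF fX fx(1)] l2norm_Dvec[OF fY fx(2)]
      by (intro mult_mono) (auto simp: l2norm_nonneg)
    finally show ?thesis .
  qed
  then show "mat_bounded (smithB Mb X Y)" "mat_norm (smithB Mb X Y) \<le> mat_norm Mb"
    using N2[OF N0] by blast+
  have fJ: "finite (colJ X)" "finite (colJ Y)" using finJ fX fY by auto
  have fs: "finite (supp X)" "finite (supp Y)" using fX fY by (auto simp: fin_vec_def)
  have sX: "supp X \<subseteq> colJ X \<times> snd ` supp X" and sY: "supp Y \<subseteq> colJ Y \<times> snd ` supp Y"
    by (rule supp_sub_J)+
  have "mat_form (\<lambda>p q. K (snd p) (snd q) * Mb p q) X Y =
    (\<Sum>p\<in>colJ Y \<times> snd ` supp Y. \<Sum>q\<in>colJ X \<times> snd ` supp X. cnj (Y p) * (K (snd p) (snd q) * Mb p q) * X q)"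
    by (rule form_superset) (use fJ fs sX sY in auto)
  also have "\<dots> = (\<Sum>s\<in>snd ` supp Y. \<Sum>t\<in>snd ` supp X. \<Sum>i\<in>colJ Y. \<Sum>j\<in>colJ X.
        cnj (Y (i, s)) * (K s t * Mb (i, s) (j, t)) * X (j, t))"
    using swap4[of "\<lambda>i s j t. cnj (Y (i, s)) * (K s t * Mb (i, s) (j, t)) * X (j, t)"] by simp
  also have "\<dots> = (\<Sum>s\<in>snd ` supp Y. \<Sum>t\<in>snd ` supp X. \<Sum>i\<in>colJ Y. \<Sum>j\<in>colJ X.
        cnj (col0 Y s) * (K s t * (cnj (cold Y i s) * Mb (i, s) (j, t) * cold X j t)) * col0 X t)"
  proof (intro sum.cong refl)
    fix s t i j assume "i \<in> colJ Y" "j \<in> colJ X"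
    then have "Y (i, s) = cold Y i s * col0 Y s" "X (j, t) = cold X j t * col0 X t"
      using decomp[OF fY, of i s] decomp[OF fX, of j t] by auto
    then show "cnj (Y (i, s)) * (K s t * Mb (i, s) (j, t)) * X (j, t) =
        cnj (col0 Y s) * (K s t * (cnj (cold Y i s) * Mb (i, s) (j, t) * cold X j t)) * col0 X t"
      by (simp add: algebra_simps)
  qed
  also have "\<dots> = (\<Sum>s\<in>snd ` supp Y. \<Sum>t\<in>snd ` supp X.
        cnj (col0 Y s) * (\<Sum>i\<in>colJ Y. \<Sum>j\<in>colJ X. K s t * (cnj (cold Y i s) * Mb (i, s) (j, t) * cold X j t)) * col0 X t)"
    by (rule expand4[symmetric])
  also have "\<dots> = (\<Sum>s\<in>snd ` supp Y. \<Sum>t\<in>snd ` supp X.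
        cnj (col0 Y s) * (K s t * smithB Mb X Y s t) * col0 X t)"
    by (simp add: smithB_def sum_distrib_left)
  also have "\<dots> = mat_form (\<lambda>s t. K s t * smithB Mb X Y s t) (col0 X) (col0 Y)"
    by (rule form_superset[symmetric]) (use fs supp_col0[of X] supp_col0[of Y] in auto)
  finally show "mat_form (\<lambda>p q. K (snd p) (snd q) * Mb p q) X Y =
     mat_form (\<lambda>s t. K s t * smithB Mb X Y s t) (col0 X) (col0 Y)" .
qed



lemma grp2: "h + - k = a + - b \<Longrightarrow> k = b + (- a + (h::'g::group_add))"
  by (metis add_diff_cancel add_diff_eq minus_add_cancel)
lemma grp3: "(a + v) + - (b + v) = a + - (b::'g::group_add)"
  by (metis add_minus_cancel add.assoc add.inverse_distrib_swap)
lemma grp3': "(a + v) - (b + v) = a - (b::'g::group_add)"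
  by (metis grp3 diff_conv_add_uminus)
lemma grp4: "a + - b + b = (a::'g::group_add)"
  by (simp add: add.assoc)
lemma grp5: "- a + (a + v) = (v::'g::group_add)"
  by (simp add: add.assoc[symmetric])
lemma unimod_cnj: "cmod z = 1 \<Longrightarrow> cnj z = inverse z"
  by (simp add: divide_conv_cnj inverse_eq_divide)
lemma unimod_nz: "cmod z = 1 \<Longrightarrow> z \<noteq> 0"
  by auto

lemma coc_twist:
  fixes \<sigma> :: "'g::group_add \<Rightarrow> 'g \<Rightarrow> complex"
  assumes s: "\<forall>g h. cmod (\<sigma> g h) = 1"
    and coc: "\<forall>g h k. \<sigma> g h * \<sigma> (g + h) k = \<sigma> h k * \<sigma> g (h + k)"
  shows "cnj (\<sigma> (a + - b) b) * \<sigma> (a + - b) (b + v) = \<sigma> a v * cnj (\<sigma> b v)"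
proof -
  have e: "\<sigma> (a + - b) b * \<sigma> a v = \<sigma> b v * \<sigma> (a + - b) (b + v)"
    using coc[rule_format, of "a + - b" b v] by (simp only: grp4)
  have nz: "\<sigma> b v \<noteq> 0" "\<sigma> (a + - b) b \<noteq> 0" using s unimod_nz by blast+
  have e2: "\<sigma> (a + - b) (b + v) = \<sigma> (a + - b) b * \<sigma> a v / \<sigma> b v"
    using e nz by (simp add: field_simps)
  show ?thesis
    unfolding e2 unimod_cnj[OF s[rule_format, of "a + - b" b]] unimod_cnj[OF s[rule_format, of b v]]
    using nz by (simp add: field_simps)
qed

lemma sum_same_support:
  assumes "finite A" "finite B" "\<And>q. q \<in> A - B \<Longrightarrow> T q = 0" "\<And>q. q \<in> B - A \<Longrightarrow> T q = 0"
  shows "sum T A = sum T B"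
proof -
  have "sum T A = sum T (A \<union> B)"
    by (rule sum.mono_neutral_left) (use assms in auto)
  also have "\<dots> = sum T B"
    by (rule sum.mono_neutral_right) (use assms in auto)
  finally show ?thesis .
qed

definition xvec :: "('g::group_add \<Rightarrow> 'g \<Rightarrow> complex) \<Rightarrow> ('g \<Rightarrow> nat) \<Rightarrow> 'g set \<Rightarrow> (nat \<times> 'g \<Rightarrow> complex) \<Rightarrow> 'g \<Rightarrow> 'g \<Rightarrow> complex" where
  "xvec \<sigma> finv F X v = (\<lambda>t. if t \<in> F then X (finv t, t + v) * cnj (\<sigma> t v) else 0)"

lemma supp_xvec: "supp (xvec \<sigma> finv F X v) \<subseteq> F"
  by (auto simp: supp_def xvec_def)

lemma nsq_xvec_sum:
  fixes \<sigma> :: "'g::group_add \<Rightarrow> 'g \<Rightarrow> complex"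
  assumes s: "\<forall>g h. cmod (\<sigma> g h) = 1" and bij: "bij_betw f {..<n} F"
    and fi: "\<And>i. i < n \<Longrightarrow> finv (f i) = i" and fV: "finite V" and fX: "fin_vec X"
  shows "(\<Sum>v\<in>V. nsq (xvec \<sigma> finv F X v)) \<le> nsq X"
proof -
  have fF: "finite F" using bij bij_betw_finite by blast
  have "(\<Sum>v\<in>V. nsq (xvec \<sigma> finv F X v)) = (\<Sum>v\<in>V. \<Sum>i<n. (cmod (X (i, f i + v)))\<^sup>2)"
  proof (rule sum.cong[OF refl])
    fix v
    have "nsq (xvec \<sigma> finv F X v) = (\<Sum>t\<in>F. (cmod (xvec \<sigma> finv F X v t))\<^sup>2)"
      by (rule nsq_superset[OF fF supp_xvec])
    also have "\<dots> = (\<Sum>i<n. (cmod (xvec \<sigma> finv F X v (f i)))\<^sup>2)"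
      by (rule sum.reindex_bij_betw[OF bij, symmetric])
    also have "\<dots> = (\<Sum>i<n. (cmod (X (i, f i + v)))\<^sup>2)"
      by (rule sum.cong[OF refl]) (use bij fi s in \<open>auto simp: xvec_def norm_mult bij_betw_def\<close>)
    finally show "nsq (xvec \<sigma> finv F X v) = (\<Sum>i<n. (cmod (X (i, f i + v)))\<^sup>2)" .
  qed
  also have "\<dots> = (\<Sum>p\<in>V \<times> {..<n}. (cmod (X ((\<lambda>p. (snd p, f (snd p) + fst p)) p)))\<^sup>2)"
    by (simp add: sum.cartesian_product')
  also have "\<dots> \<le> (\<Sum>g\<in>supp X. (cmod (X g))\<^sup>2)"
    by (rule sum_inj_supp_le[where w = "\<lambda>z. (cmod z)\<^sup>2"]) (use fV fX in \<open>auto simp: inj_on_def fin_vec_def\<close>)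
  finally show ?thesis by (simp add: nsq_def)
qed


definition Cmat :: "('g::group_add \<Rightarrow> 'g \<Rightarrow> complex) \<Rightarrow> ('g \<Rightarrow> 'g \<Rightarrow> complex) \<Rightarrow> (nat \<Rightarrow> 'g) \<Rightarrow> nat \<Rightarrow> nat \<Rightarrow> 'g \<Rightarrow> complex" where
  "Cmat \<sigma> A f = (\<lambda>i j g. if g = f i + - f j then A (f i) (f j) * cnj (\<sigma> (f i + - f j) (f j)) else 0)"

lemma fin_Cmat: "fin_vec (Cmat \<sigma> A f i j)"
proof -
  have "supp (Cmat \<sigma> A f i j) \<subseteq> {f i + - f j}" by (auto simp: supp_def Cmat_def)
  then show ?thesis unfolding fin_vec_def using finite_subset by blast
qed

lemma fin_Cmat_phi: "fin_vec (\<lambda>g. \<phi> g * Cmat \<sigma> A f i j g)"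
proof -
  have "supp (\<lambda>g. \<phi> g * Cmat \<sigma> A f i j g) \<subseteq> {f i + - f j}" by (auto simp: supp_def Cmat_def)
  then show ?thesis unfolding fin_vec_def using finite_subset by blast
qed

lemma blockA_norm:
  fixes \<sigma> :: "'g::group_add \<Rightarrow> 'g \<Rightarrow> complex" and A :: "'g \<Rightarrow> 'g \<Rightarrow> complex"
  assumes s: "\<forall>g h. cmod (\<sigma> g h) = 1"
    and coc: "\<forall>g h k. \<sigma> g h * \<sigma> (g + h) k = \<sigma> h k * \<sigma> g (h + k)"
    and A: "mat_bounded A" and bij: "bij_betw f {..<n} F"
  shows "mat_norm (block_mat \<sigma> n (Cmat \<sigma> A f)) \<le> mat_norm A"
proof -
  define Bm where "Bm = block_mat \<sigma> n (Cmat \<sigma> A f)"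
  define finv where "finv = the_inv_into {..<n} f"
  have fi: "\<And>i. i < n \<Longrightarrow> finv (f i) = i"
    using bij by (simp add: finv_def the_inv_into_f_f bij_betw_def)
  have fF: "finite F" using bij bij_betw_finite by blast
  have fimg: "\<And>i. i < n \<Longrightarrow> f i \<in> F" using bij by (auto simp: bij_betw_def)
  have N0: "0 \<le> mat_norm A" by (rule mat_norm_nonneg[OF A])
  have Bnz: "i < n \<and> j < n \<and> k = f j + (- f i + h)" if "Bm (i, h) (j, k) \<noteq> 0" for i h j k
    using that by (auto simp: Bm_def Cmat_def block_val split: if_splits intro: grp2)
  have Bval: "Bm (i, f i + v) (j, f j + v) = A (f i) (f j) * (\<sigma> (f i) v * cnj (\<sigma> (f j) v))"
    if "i < n" "j < n" for i j v
  proof -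
    have "Bm (i, f i + v) (j, f j + v) = A (f i) (f j) * (cnj (\<sigma> (f i + - f j) (f j)) * \<sigma> (f i + - f j) (f j + v))"
      using that by (simp add: Bm_def Cmat_def block_val grp3' mult.assoc)
    then show ?thesis using coc_twist[OF s coc] by simp
  qed
  show ?thesis unfolding Bm_def[symmetric]
  proof (rule N2(2)[OF N0])
    fix X Y :: "nat \<times> 'g \<Rightarrow> complex" assume fX: "fin_vec X" and fY: "fin_vec Y"
    have fsX: "finite (supp X)" and fsY: "finite (supp Y)" using fX fY by (auto simp: fin_vec_def)
    define V where "V = (\<lambda>p. - f (fst p) + snd p) ` supp Y"
    have fV: "finite V" using fsY by (simp add: V_def)
    define xv where "xv = xvec \<sigma> finv F X"
    define yv where "yv = xvec \<sigma> finv F Y"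
    have fxv: "fin_vec (xv v)" "fin_vec (yv v)" for v
      unfolding xv_def yv_def fin_vec_def using supp_xvec fF finite_subset by metis+
    define G where "G = (\<lambda>p. \<Sum>j<n. cnj (Y p) * Bm p (j, f j + (- f (fst p) + snd p)) * X (j, f j + (- f (fst p) + snd p)))"
    have id1: "mat_form Bm X Y = (\<Sum>p\<in>supp Y. G p)"
      unfolding mat_form_def
    proof (rule sum.cong[OF refl])
      fix p assume "p \<in> supp Y"
      obtain i h where p: "p = (i, h)" by (cases p)
      define v where "v = - f i + h"
      have "(\<Sum>q\<in>supp X. cnj (Y p) * Bm p q * X q) = (\<Sum>q\<in>(\<lambda>j. (j, f j + v)) ` {..<n}. cnj (Y p) * Bm p q * X q)"
      proof (rule sum_same_support[OF fsX])
        fix q assume q: "q \<in> supp X - (\<lambda>j. (j, f j + v)) ` {..<n}"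
        obtain j k where qq: "q = (j, k)" by (cases q)
        show "cnj (Y p) * Bm p q * X q = 0"
        proof (rule ccontr)
          assume "cnj (Y p) * Bm p q * X q \<noteq> 0"
          then have "Bm (i, h) (j, k) \<noteq> 0" by (auto simp: p qq)
          then have "j < n" "k = f j + v" using Bnz v_def by auto
          then show False using q qq by auto
        qed
      next
        fix q assume "q \<in> (\<lambda>j. (j, f j + v)) ` {..<n} - supp X"
        then show "cnj (Y p) * Bm p q * X q = 0" by (auto simp: supp_def)
      qed simp
      also have "\<dots> = (\<Sum>j<n. cnj (Y p) * Bm p (j, f j + v) * X (j, f j + v))"
        by (subst sum.reindex) (auto simp: inj_on_def)
      finally show "(\<Sum>q\<in>supp X. cnj (Y p) * Bm p q * X q) = G p"
        by (simp add: G_def p v_def)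
    qed
    have id2: "(\<Sum>p\<in>supp Y. G p) = (\<Sum>p\<in>(\<lambda>q. (snd q, f (snd q) + fst q)) ` (V \<times> {..<n}). G p)"
    proof (rule sum_same_support[OF fsY])
      fix p assume p: "p \<in> supp Y - (\<lambda>q. (snd q, f (snd q) + fst q)) ` (V \<times> {..<n})"
      obtain i h where pp: "p = (i, h)" by (cases p)
      show "G p = 0"
      proof (cases "i < n")
        case True
        have "(i, h) \<in> supp Y" using p pp by auto
        then have "- f i + h \<in> V" unfolding V_def by (rule rev_image_eqI) simp
        then have "(- f i + h, i) \<in> V \<times> {..<n}" using True by simp
        moreover have "p = (\<lambda>q. (snd q, f (snd q) + fst q)) (- f i + h, i)"
          by (simp add: pp add.assoc[symmetric])
        ultimately show ?thesis using p by blast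
      next
        case False
        then show ?thesis unfolding G_def using Bnz pp by (intro sum.neutral) fastforce
      qed
    next
      fix p assume "p \<in> (\<lambda>q. (snd q, f (snd q) + fst q)) ` (V \<times> {..<n}) - supp Y"
      then show "G p = 0" by (simp add: G_def supp_def)
    qed (use fV in simp)
    have id3: "(\<Sum>p\<in>(\<lambda>q. (snd q, f (snd q) + fst q)) ` (V \<times> {..<n}). G p) = (\<Sum>v\<in>V. \<Sum>i<n. G (i, f i + v))"
      by (subst sum.reindex) (auto simp: inj_on_def sum.cartesian_product')
    have id4: "(\<Sum>i<n. G (i, f i + v)) = mat_form A (xv v) (yv v)" for v
    proof -
      have "mat_form A (xv v) (yv v) = (\<Sum>s\<in>F. \<Sum>t\<in>F. cnj (yv v s) * A s t * xv v t)"
        by (rule form_superset) (use fF supp_xvec[of \<sigma> finv F X v] supp_xvec[of \<sigma> finv F Y v] in \<open>auto simp: xv_def yv_def\<close>)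
      also have "\<dots> = (\<Sum>i<n. \<Sum>t\<in>F. cnj (yv v (f i)) * A (f i) t * xv v t)"
        by (rule sum.reindex_bij_betw[OF bij, symmetric])
      also have "\<dots> = (\<Sum>i<n. \<Sum>j<n. cnj (yv v (f i)) * A (f i) (f j) * xv v (f j))"
        by (rule sum.cong[OF refl], rule sum.reindex_bij_betw[OF bij, symmetric])
      also have "\<dots> = (\<Sum>i<n. G (i, f i + v))"
        unfolding G_def
      proof (rule sum.cong[OF refl], rule sum.cong[OF refl])
        fix i j assume "i \<in> {..<n}" "j \<in> {..<n}"
        then have ij: "i < n" "j < n" by auto
        show "cnj (yv v (f i)) * A (f i) (f j) * xv v (f j) =
          cnj (Y (i, f i + v)) * Bm (i, f i + v) (j, f j + (- f (fst (i, f i + v)) + snd (i, f i + v))) *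
          X (j, f j + (- f (fst (i, f i + v)) + snd (i, f i + v)))"
          using ij by (simp add: grp5 Bval xv_def yv_def xvec_def fi fimg algebra_simps)
      qed
      finally show ?thesis by simp
    qed
    have eq: "mat_form Bm X Y = (\<Sum>v\<in>V. mat_form A (xv v) (yv v))"
      using id1 id2 id3 id4 by simp
    have "cmod (mat_form Bm X Y) \<le> (\<Sum>v\<in>V. cmod (mat_form A (xv v) (yv v)))"
      unfolding eq by (rule norm_sum)
    also have "\<dots> \<le> (\<Sum>v\<in>V. mat_norm A * (l2norm (xv v) * l2norm (yv v)))"
      by (rule sum_mono) (use N1[OF A fxv] in \<open>simp add: mult.assoc\<close>)
    also have "\<dots> = mat_norm A * (\<Sum>v\<in>V. l2norm (xv v) * l2norm (yv v))"
      by (simp add: sum_distrib_left)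
    also have "\<dots> \<le> mat_norm A * (sqrt (\<Sum>v\<in>V. (l2norm (xv v))\<^sup>2) * sqrt (\<Sum>v\<in>V. (l2norm (yv v))\<^sup>2))"
      by (intro mult_left_mono cs_sqrt N0)
    also have "\<dots> \<le> mat_norm A * (l2norm X * l2norm Y)"
    proof (intro mult_left_mono mult_mono N0)
      show "sqrt (\<Sum>v\<in>V. (l2norm (xv v))\<^sup>2) \<le> l2norm X"
        unfolding l2norm_sq l2norm_nsq[of X] xv_def
        by (rule real_sqrt_le_mono, rule nsq_xvec_sum[OF s bij fi fV fX])
      show "sqrt (\<Sum>v\<in>V. (l2norm (yv v))\<^sup>2) \<le> l2norm Y"
        unfolding l2norm_sq l2norm_nsq[of Y] yv_def
        by (rule real_sqrt_le_mono, rule nsq_xvec_sum[OF s bij fi fV fY])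
    qed (auto simp: l2norm_nonneg sum_nonneg)
    finally show "cmod (mat_form Bm X Y) \<le> mat_norm A * l2norm X * l2norm Y"
      by (simp add: mult.assoc)
  qed
qed



lemma unimod_mult: "cmod z = 1 \<Longrightarrow> cnj z * z = 1"
  by (simp add: unimod_cnj unimod_nz)

definition embv :: "(nat \<Rightarrow> 'g) \<Rightarrow> nat \<Rightarrow> ('g \<Rightarrow> complex) \<Rightarrow> nat \<times> 'g \<Rightarrow> complex" where
  "embv f n \<xi> = (\<lambda>(j, k). if j < n \<and> k = f j then \<xi> (f j) else 0)"

lemma supp_embv: "supp (embv f n \<xi>) \<subseteq> (\<lambda>i. (i, f i)) ` {..<n}"
  by (auto simp: supp_def embv_def split: if_splits)

lemma fin_embv: "fin_vec (embv f n \<xi>)"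
  unfolding fin_vec_def using supp_embv[of f n \<xi>] finite_subset by blast

lemma inj_graph: "inj_on (\<lambda>i. (i, f i)) A"
  by (auto simp: inj_on_def)

lemma nsq_embv:
  assumes bij: "bij_betw f {..<n} F" and sx: "supp \<xi> \<subseteq> F"
  shows "nsq (embv f n \<xi>) = nsq \<xi>"
proof -
  have fF: "finite F" using bij bij_betw_finite by blast
  have "nsq (embv f n \<xi>) = (\<Sum>p\<in>(\<lambda>i. (i, f i)) ` {..<n}. (cmod (embv f n \<xi> p))\<^sup>2)"
    by (rule nsq_superset[OF _ supp_embv]) simp
  also have "\<dots> = (\<Sum>i<n. (cmod (\<xi> (f i)))\<^sup>2)"
    by (simp add: sum.reindex[OF inj_graph] embv_def)
  also have "\<dots> = (\<Sum>t\<in>F. (cmod (\<xi> t))\<^sup>2)"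
    by (rule sum.reindex_bij_betw[OF bij])
  also have "\<dots> = nsq \<xi>" by (rule nsq_superset[OF fF sx, symmetric])
  finally show ?thesis .
qed

lemma l2norm_embv: "bij_betw f {..<n} F \<Longrightarrow> supp \<xi> \<subseteq> F \<Longrightarrow> l2norm (embv f n \<xi>) = l2norm \<xi>"
  by (simp add: l2norm_nsq nsq_embv)

lemma blockA_form:
  fixes \<sigma> :: "'g::group_add \<Rightarrow> 'g \<Rightarrow> complex"
  assumes s: "\<forall>g h. cmod (\<sigma> g h) = 1" and bij: "bij_betw f {..<n} F"
    and sx: "supp \<xi> \<subseteq> F" and sy: "supp \<eta> \<subseteq> F"
  shows "mat_form (block_mat \<sigma> n (\<lambda>i j g. \<phi> g * Cmat \<sigma> A f i j g)) (embv f n \<xi>) (embv f n \<eta>) =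
    mat_form (\<lambda>s t. \<phi> (s + - t) * A s t) \<xi> \<eta>"
proof -
  have fF: "finite F" using bij bij_betw_finite by blast
  define Mp where "Mp = block_mat \<sigma> n (\<lambda>i j g. \<phi> g * Cmat \<sigma> A f i j g)"
  have Mv: "Mp (i, f i) (j, f j) = \<phi> (f i + - f j) * A (f i) (f j)" if "i < n" "j < n" for i j
  proof -
    have "Mp (i, f i) (j, f j) = \<phi> (f i + - f j) * A (f i) (f j) * (cnj (\<sigma> (f i + - f j) (f j)) * \<sigma> (f i + - f j) (f j))"
      using that by (simp add: Mp_def block_val Cmat_def mult.assoc)
    then show ?thesis using unimod_mult s by simp
  qed
  have "mat_form Mp (embv f n \<xi>) (embv f n \<eta>) =
     (\<Sum>p\<in>(\<lambda>i. (i, f i)) ` {..<n}. \<Sum>q\<in>(\<lambda>i. (i, f i)) ` {..<n}. cnj (embv f n \<eta> p) * Mp p q * embv f n \<xi> q)"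
    by (rule form_superset) (auto intro: supp_embv[THEN subsetD])
  also have "\<dots> = (\<Sum>i<n. \<Sum>j<n. cnj (\<eta> (f i)) * (\<phi> (f i + - f j) * A (f i) (f j)) * \<xi> (f j))"
    by (simp add: sum.reindex[OF inj_graph] embv_def Mv)
  also have "\<dots> = (\<Sum>i<n. \<Sum>t\<in>F. cnj (\<eta> (f i)) * (\<phi> (f i + - t) * A (f i) t) * \<xi> t)"
    by (rule sum.cong[OF refl], rule sum.reindex_bij_betw[OF bij])
  also have "\<dots> = (\<Sum>s\<in>F. \<Sum>t\<in>F. cnj (\<eta> s) * (\<phi> (s + - t) * A s t) * \<xi> t)"
    by (rule sum.reindex_bij_betw[OF bij])
  also have "\<dots> = mat_form (\<lambda>s t. \<phi> (s + - t) * A s t) \<xi> \<eta>"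
    by (rule form_superset[symmetric]) (use fF sx sy in auto)
  finally show ?thesis by (simp add: Mp_def)
qed

lemma A_dir:
  fixes \<sigma> :: "'g::group_add \<Rightarrow> 'g \<Rightarrow> complex"
  assumes s: "\<forall>g h. cmod (\<sigma> g h) = 1"
    and coc: "\<forall>g h k. \<sigma> g h * \<sigma> (g + h) k = \<sigma> h k * \<sigma> g (h + k)"
    and cb: "cb_bound \<sigma> \<phi> Cb" and A: "mat_bounded A"
  shows "mat_bounded (\<lambda>s t. \<phi> (s + - t) * A s t)"
    "mat_norm (\<lambda>s t. \<phi> (s + - t) * A s t) \<le> Cb * mat_norm A"
proof -
  have C0: "0 \<le> Cb" and cbi: "\<And>n C. (\<forall>i j. fin_vec (C i j)) \<Longrightarrow>
      mat_norm (block_mat \<sigma> n (\<lambda>i j g. \<phi> g * C i j g)) \<le> Cb * mat_norm (block_mat \<sigma> n C)"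
    using cb unfolding cb_bound_def by auto
  have N0: "0 \<le> mat_norm A" by (rule mat_norm_nonneg[OF A])
  have R0: "0 \<le> Cb * mat_norm A" using C0 N0 by simp
  have H: "cmod (mat_form (\<lambda>s t. \<phi> (s + - t) * A s t) \<xi> \<eta>) \<le> Cb * mat_norm A * l2norm \<xi> * l2norm \<eta>"
    if fx: "fin_vec \<xi>" "fin_vec \<eta>" for \<xi> \<eta>
  proof -
    define F where "F = supp \<xi> \<union> supp \<eta>"
    have fF: "finite F" using fx by (simp add: F_def fin_vec_def)
    obtain f where bij: "bij_betw f {..<card F} F"
      using ex_bij_betw_nat_finite[OF fF] by (auto simp: atLeast0LessThan)
    define n where "n = card F"
    have bij': "bij_betw f {..<n} F" using bij by (simp add: n_def)
    have sx: "supp \<xi> \<subseteq> F" and sy: "supp \<eta> \<subseteq> F" by (auto simp: F_def)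
    define Mb where "Mb = block_mat \<sigma> n (Cmat \<sigma> A f)"
    define Mp where "Mp = block_mat \<sigma> n (\<lambda>i j g. \<phi> g * Cmat \<sigma> A f i j g)"
    have bMp: "mat_bounded Mp" unfolding Mp_def
      by (rule block_bounded[OF s]) (simp add: fin_Cmat_phi)
    have MpMb: "mat_norm Mp \<le> Cb * mat_norm Mb"
      unfolding Mp_def Mb_def by (rule cbi) (simp add: fin_Cmat)
    have MbA: "mat_norm Mb \<le> mat_norm A"
      unfolding Mb_def by (rule blockA_norm[OF s coc A bij'])
    have "cmod (mat_form (\<lambda>s t. \<phi> (s + - t) * A s t) \<xi> \<eta>) = cmod (mat_form Mp (embv f n \<xi>) (embv f n \<eta>))"
      unfolding Mp_def by (simp add: blockA_form[OF s bij' sx sy])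
    also have "\<dots> \<le> mat_norm Mp * l2norm (embv f n \<xi>) * l2norm (embv f n \<eta>)"
      by (rule N1[OF bMp fin_embv fin_embv])
    also have "\<dots> = mat_norm Mp * l2norm \<xi> * l2norm \<eta>"
      by (simp add: l2norm_embv[OF bij' sx] l2norm_embv[OF bij' sy])
    also have "\<dots> \<le> Cb * mat_norm A * l2norm \<xi> * l2norm \<eta>"
    proof (intro mult_right_mono l2norm_nonneg)
      show "mat_norm Mp \<le> Cb * mat_norm A"
        using MpMb mult_left_mono[OF MbA C0] by linarith
    qed
    finally show ?thesis .
  qed
  show "mat_bounded (\<lambda>s t. \<phi> (s + - t) * A s t)" by (rule N2(1)[OF R0 H])
  show "mat_norm (\<lambda>s t. \<phi> (s + - t) * A s t) \<le> Cb * mat_norm A" by (rule N2(2)[OF R0 H])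
qed

lemma B_dir:
  fixes \<sigma> :: "'g::group_add \<Rightarrow> 'g \<Rightarrow> complex"
  assumes s: "\<forall>g h. cmod (\<sigma> g h) = 1"
    and sm: "schur_mult (\<lambda>s t. \<phi> (s + - t))" and C0: "0 \<le> Cs"
    and SB: "\<forall>A. mat_bounded A \<longrightarrow> mat_norm (\<lambda>s t. \<phi> (s + - t) * A s t) \<le> Cs * mat_norm A"
  shows "cb_bound \<sigma> \<phi> Cs" "\<phi> \<in> MA \<sigma>"
proof -
  have smr: "mat_bounded (\<lambda>s t. \<phi> (s + - t) * A s t)" if "mat_bounded A" for A
    using sm that unfolding schur_mult_def by blast
  show "cb_bound \<sigma> \<phi> Cs"
    unfolding cb_bound_def
  proof (intro conjI C0 allI impI)
    fix n and C :: "nat \<Rightarrow> nat \<Rightarrow> 'g \<Rightarrow> complex" assume fc: "\<forall>i j. fin_vec (C i j)"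
    define Mb where "Mb = block_mat \<sigma> n C"
    have bMb: "mat_bounded Mb" unfolding Mb_def by (rule block_bounded[OF s fc])
    have N0: "0 \<le> mat_norm Mb" by (rule mat_norm_nonneg[OF bMb])
    have eq: "block_mat \<sigma> n (\<lambda>i j g. \<phi> g * C i j g) = (\<lambda>p q. \<phi> (snd p + - snd q) * Mb p q)"
    proof (intro ext)
      fix p q :: "nat \<times> 'g"
      show "block_mat \<sigma> n (\<lambda>i j g. \<phi> g * C i j g) p q = \<phi> (snd p + - snd q) * Mb p q"
        by (cases p, cases q) (simp add: block_val Mb_def)
    qed
    have HH: "cmod (mat_form (\<lambda>p q. \<phi> (snd p + - snd q) * Mb p q) X Y) \<le> Cs * mat_norm Mb * l2norm X * l2norm Y"
      if fX: "fin_vec X" and fY: "fin_vec Y" for X Y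
    proof -
      define B where "B = smithB Mb X Y"
      have bB: "mat_bounded B" and nB: "mat_norm B \<le> mat_norm Mb"
        unfolding B_def using smith[OF bMb fX fY] by auto
      have bKB: "mat_bounded (\<lambda>s t. \<phi> (s + - t) * B s t)" by (rule smr[OF bB])
      have NKB: "0 \<le> mat_norm (\<lambda>s t. \<phi> (s + - t) * B s t)" by (rule mat_norm_nonneg[OF bKB])
      have "cmod (mat_form (\<lambda>p q. \<phi> (snd p + - snd q) * Mb p q) X Y) =
          cmod (mat_form (\<lambda>s t. \<phi> (s + - t) * B s t) (col0 X) (col0 Y))"
        using smith(3)[OF bMb fX fY, of "\<lambda>s t. \<phi> (s + - t)"] by (simp add: B_def)
      also have "\<dots> \<le> mat_norm (\<lambda>s t. \<phi> (s + - t) * B s t) * l2norm (col0 X) * l2norm (col0 Y)"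
        by (rule N1[OF bKB fin_col0[OF fX] fin_col0[OF fY]])
      also have "\<dots> = mat_norm (\<lambda>s t. \<phi> (s + - t) * B s t) * l2norm X * l2norm Y"
        by (simp add: l2norm_col0 fX fY)
      also have "\<dots> \<le> Cs * mat_norm Mb * l2norm X * l2norm Y"
      proof (intro mult_right_mono l2norm_nonneg)
        show "mat_norm (\<lambda>s t. \<phi> (s + - t) * B s t) \<le> Cs * mat_norm Mb"
          using SB bB mult_left_mono[OF nB C0] by fastforce
      qed
      finally show ?thesis .
    qed
    have "mat_norm (\<lambda>p q. \<phi> (snd p + - snd q) * Mb p q) \<le> Cs * mat_norm Mb"
      by (rule N2(2)[OF mult_nonneg_nonneg[OF C0 N0] HH])
    then show "mat_norm (block_mat \<sigma> n (\<lambda>i j g. \<phi> g * C i j g)) \<le> Cs * mat_norm (block_mat \<sigma> n C)"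
      by (simp add: eq Mb_def)
  qed
  show "\<phi> \<in> MA \<sigma>"
    unfolding MA_def
  proof (intro CollectI exI allI impI)
    fix c :: "'g \<Rightarrow> complex" assume fc: "fin_vec c"
    have eq: "tw_mat \<sigma> (\<lambda>g. \<phi> g * c g) = (\<lambda>s t. \<phi> (s + - t) * tw_mat \<sigma> c s t)"
      by (simp add: fun_eq_iff tw_mat_def mult.assoc)
    show "mat_norm (tw_mat \<sigma> (\<lambda>g. \<phi> g * c g)) \<le> Cs * mat_norm (tw_mat \<sigma> c)"
      unfolding eq using SB tw_bounded[OF s fc] by blast
  qed
qed



lemma form_cmat: "mat_form (\<lambda>s t. c * A s t) x y = c * mat_form A x y"
  unfolding mat_form_def sum_distrib_left
  by (rule sum.cong[OF refl], rule sum.cong[OF refl]) (simp add: algebra_simps)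

lemma comp_le_l2: assumes "fin_vec x" shows "cmod (x t) \<le> l2norm x"
proof (cases "t \<in> supp x")
  case True
  have "(cmod (x t))\<^sup>2 \<le> nsq x"
    unfolding nsq_def by (rule member_le_sum[OF True]) (use assms in \<open>auto simp: fin_vec_def\<close>)
  then have "sqrt ((cmod (x t))\<^sup>2) \<le> sqrt (nsq x)" by (rule real_sqrt_le_mono)
  then show ?thesis by (simp add: l2norm_nsq)
next
  case False then show ?thesis by (simp add: supp_def l2norm_nonneg)
qed

lemma bad_block:
  fixes K :: "'i \<Rightarrow> 'i \<Rightarrow> complex"
  assumes sm: "schur_mult K" and A: "mat_bounded A"
    and big: "R * mat_norm A < mat_norm (\<lambda>s t. K s t * A s t)"
  shows "\<exists>P \<xi> \<eta>. fin_vec \<xi> \<and> fin_vec \<eta> \<and> l2norm \<xi> \<le> 1 \<and> l2norm \<eta> \<le> 1 \<and>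
     (\<forall>x y. fin_vec x \<longrightarrow> fin_vec y \<longrightarrow> cmod (mat_form P x y) \<le> l2norm x * l2norm y) \<and>
     (\<forall>s t. P s t \<noteq> 0 \<longrightarrow> s \<in> supp \<eta> \<and> t \<in> supp \<xi>) \<and>
     R < cmod (mat_form (\<lambda>s t. K s t * P s t) \<xi> \<eta>)"
proof -
  have bKA: "mat_bounded (\<lambda>s t. K s t * A s t)" using sm A unfolding schur_mult_def by blast
  have "\<exists>z\<in>unitset (\<lambda>s t. K s t * A s t). R * mat_norm A < z"
    using big unfolding mat_norm_unitset
    by (subst (asm) less_cSup_iff[OF _ unitset_bdd[OF bKA]]) (use unitset_ne in auto)
  then obtain \<xi> \<eta> where fx: "fin_vec \<xi>" "fin_vec \<eta>" "l2norm \<xi> \<le> 1" "l2norm \<eta> \<le> 1"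
    and gt: "R * mat_norm A < cmod (mat_form (\<lambda>s t. K s t * A s t) \<xi> \<eta>)"
    unfolding unitset_def by blast
  have N0: "0 \<le> mat_norm A" by (rule mat_norm_nonneg[OF A])
  have nA: "0 < mat_norm A"
  proof (rule ccontr)
    assume "\<not> 0 < mat_norm A"
    then have "mat_norm A = 0" using N0 by simp
    then have "\<And>s t. A s t = 0" using entry_bound[OF A] by (metis norm_le_zero_iff)
    then have "mat_form (\<lambda>s t. K s t * A s t) \<xi> \<eta> = 0" by (simp add: mat_form_def)
    then show False using gt \<open>mat_norm A = 0\<close> by simp
  qed
  define c where "c = complex_of_real (inverse (mat_norm A))"
  have cc: "cmod c = inverse (mat_norm A)" using nA unfolding c_def norm_of_real by simp
  define P where "P = (\<lambda>s t. if s \<in> supp \<eta> \<and> t \<in> supp \<xi> then c * A s t else 0)"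
  have "mat_form (\<lambda>s t. K s t * P s t) \<xi> \<eta> = c * mat_form (\<lambda>s t. K s t * A s t) \<xi> \<eta>"
    unfolding mat_form_def sum_distrib_left
    by (rule sum.cong[OF refl], rule sum.cong[OF refl]) (simp add: P_def algebra_simps)
  then have "cmod (mat_form (\<lambda>s t. K s t * P s t) \<xi> \<eta>) = cmod (mat_form (\<lambda>s t. K s t * A s t) \<xi> \<eta>) / mat_norm A"
    by (simp add: norm_mult cc divide_inverse mult.commute)
  moreover have "R < cmod (mat_form (\<lambda>s t. K s t * A s t) \<xi> \<eta>) / mat_norm A"
    using gt nA by (simp add: pos_less_divide_eq)
  ultimately have big2: "R < cmod (mat_form (\<lambda>s t. K s t * P s t) \<xi> \<eta>)" by simp
  have bnd: "cmod (mat_form P x y) \<le> l2norm x * l2norm y" if fxy: "fin_vec x" "fin_vec y" for x y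
  proof -
    have "mat_form P x y = c * mat_form A (restr x (supp \<xi>)) (restr y (supp \<eta>))"
      unfolding P_def by (simp add: form_restr_mat[OF fxy] form_cmat)
    then have "cmod (mat_form P x y) = inverse (mat_norm A) * cmod (mat_form A (restr x (supp \<xi>)) (restr y (supp \<eta>)))"
      by (simp add: norm_mult cc)
    also have "\<dots> \<le> inverse (mat_norm A) * (mat_norm A * l2norm (restr x (supp \<xi>)) * l2norm (restr y (supp \<eta>)))"
      by (intro mult_left_mono N1[OF A fin_restr fin_restr] fxy) (use nA in simp)
    also have "\<dots> = l2norm (restr x (supp \<xi>)) * l2norm (restr y (supp \<eta>))"
      using nA by simp
    also have "\<dots> \<le> l2norm x * l2norm y"
      by (intro mult_mono l2norm_restr fxy l2norm_nonneg)
    finally show ?thesis .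
  qed
  have supP: "\<forall>s t. P s t \<noteq> 0 \<longrightarrow> s \<in> supp \<eta> \<and> t \<in> supp \<xi>" by (simp add: P_def)
  show ?thesis using fx bnd supP big2 by blast
qed

lemma unif_fin:
  fixes K :: "'i \<Rightarrow> 'i \<Rightarrow> complex"
  assumes fin: "finite (UNIV :: 'i set)" and sm: "schur_mult K"
  shows "\<exists>R\<ge>0. \<forall>A. mat_bounded A \<longrightarrow> mat_norm (\<lambda>s t. K s t * A s t) \<le> R * mat_norm A"
proof (intro exI conjI allI impI)
  define R where "R = (\<Sum>s\<in>UNIV. \<Sum>t\<in>UNIV. cmod (K s t))"
  show R0: "0 \<le> R" by (simp add: R_def sum_nonneg)
  fix A :: "'i \<Rightarrow> 'i \<Rightarrow> complex" assume A: "mat_bounded A"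
  have N0: "0 \<le> mat_norm A" by (rule mat_norm_nonneg[OF A])
  show "mat_norm (\<lambda>s t. K s t * A s t) \<le> R * mat_norm A"
  proof (rule N2(2))
    show "0 \<le> R * mat_norm A" using R0 N0 by simp
    fix \<xi> \<eta> :: "'i \<Rightarrow> complex" assume fx: "fin_vec \<xi>" "fin_vec \<eta>"
    define c where "c = mat_norm A * l2norm \<xi> * l2norm \<eta>"
    have c0: "0 \<le> c" using N0 by (simp add: c_def l2norm_nonneg)
    have trm: "cmod (\<eta> s) * cmod (K s t * A s t) * cmod (\<xi> t) \<le> cmod (K s t) * c" for s t
    proof -
      have "cmod (A s t) * cmod (\<xi> t) * cmod (\<eta> s) \<le> mat_norm A * l2norm \<xi> * l2norm \<eta>"
        by (intro mult_mono entry_bound[OF A] comp_le_l2 fx) (auto simp: N0 l2norm_nonneg)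
      then have "cmod (K s t) * (cmod (A s t) * cmod (\<xi> t) * cmod (\<eta> s)) \<le> cmod (K s t) * c"
        unfolding c_def by (rule mult_left_mono) simp
      then show ?thesis by (simp add: norm_mult algebra_simps)
    qed
    have "cmod (mat_form (\<lambda>s t. K s t * A s t) \<xi> \<eta>) \<le>
        (\<Sum>s\<in>supp \<eta>. \<Sum>t\<in>supp \<xi>. cmod (\<eta> s) * cmod (K s t * A s t) * cmod (\<xi> t))"
      by (rule form_abs_bound)
    also have "\<dots> \<le> (\<Sum>s\<in>supp \<eta>. \<Sum>t\<in>supp \<xi>. cmod (K s t) * c)"
      by (intro sum_mono trm)
    also have "\<dots> \<le> (\<Sum>s\<in>supp \<eta>. \<Sum>t\<in>UNIV. cmod (K s t) * c)"
      by (intro sum_mono sum_mono2 fin) (auto simp: c0)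
    also have "\<dots> \<le> (\<Sum>s\<in>UNIV. \<Sum>t\<in>UNIV. cmod (K s t) * c)"
      by (intro sum_mono2 fin) (auto simp: c0 sum_nonneg)
    also have "\<dots> = R * mat_norm A * l2norm \<xi> * l2norm \<eta>"
      by (simp add: R_def c_def sum_distrib_right mult.assoc)
    finally show "cmod (mat_form (\<lambda>s t. K s t * A s t) \<xi> \<eta>) \<le> R * mat_norm A * l2norm \<xi> * l2norm \<eta>" .
  qed
qed



lemma exist_translate:
  assumes inf: "infinite (UNIV :: 'g::group_add set)" and fE: "finite E" and fU: "finite U"
  shows "\<exists>g::'g. (\<lambda>x. x + g) ` E \<inter> U = {}"
proof -
  define bad where "bad = (\<Union>x\<in>E. (\<lambda>u. - x + u) ` U)"
  have "finite bad" using fE fU by (simp add: bad_def)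
  then obtain g where g: "g \<notin> bad" using ex_new_if_finite[OF inf] by blast
  have "(\<lambda>x. x + g) ` E \<inter> U = {}"
  proof (rule ccontr)
    assume "(\<lambda>x. x + g) ` E \<inter> U \<noteq> {}"
    then obtain x where x: "x \<in> E" "x + g \<in> U" by blast
    have "g = - x + (x + g)" by (simp add: add.assoc[symmetric])
    then have "g \<in> bad" unfolding bad_def using x by blast
    then show False using g by simp
  qed
  then show ?thesis by blast
qed

definition gsel :: "'g::group_add set \<Rightarrow> 'g set \<Rightarrow> 'g" where
  "gsel E U = (SOME g. (\<lambda>x. x + g) ` E \<inter> U = {})"

primrec usedU :: "(nat \<Rightarrow> 'g::group_add set) \<Rightarrow> nat \<Rightarrow> 'g set" where
  "usedU E 0 = {}"
| "usedU E (Suc m) = usedU E m \<union> (\<lambda>x. x + gsel (E m) (usedU E m)) ` E m"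

definition gtr :: "(nat \<Rightarrow> 'g::group_add set) \<Rightarrow> nat \<Rightarrow> 'g" where
  "gtr E m = gsel (E m) (usedU E m)"

definition Wb :: "(nat \<Rightarrow> 'g::group_add set) \<Rightarrow> nat \<Rightarrow> 'g set" where
  "Wb E m = (\<lambda>x. x + gtr E m) ` E m"

lemma fin_usedU: "(\<And>m. finite (E m)) \<Longrightarrow> finite (usedU E m)"
  by (induction m) auto

lemma Wb_used:
  fixes E :: "nat \<Rightarrow> 'g::group_add set"
  assumes inf: "infinite (UNIV :: 'g set)" and fE: "\<And>m. finite (E m)"
  shows "Wb E m \<inter> usedU E m = {}"
proof -
  have "\<exists>g::'g. (\<lambda>x. x + g) ` E m \<inter> usedU E m = {}"
    by (rule exist_translate[OF inf fE fin_usedU[OF fE]])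
  then show ?thesis unfolding Wb_def gtr_def gsel_def by (rule someI_ex)
qed

lemma Wb_sub: "l < m \<Longrightarrow> Wb E l \<subseteq> usedU E m"
proof (induction m)
  case 0 then show ?case by simp
next
  case (Suc m)
  show ?case
  proof (cases "l < m")
    case True then show ?thesis using Suc.IH by auto
  next
    case False
    then have "l = m" using Suc.prems by simp
    then show ?thesis by (auto simp: Wb_def gtr_def)
  qed
qed

lemma Wb_disj:
  fixes E :: "nat \<Rightarrow> 'g::group_add set"
  assumes inf: "infinite (UNIV :: 'g set)" and fE: "\<And>m. finite (E m)" and lm: "l \<noteq> m"
  shows "Wb E l \<inter> Wb E m = {}"
proof -
  have u: "Wb E k \<inter> usedU E k = {}" for k by (rule Wb_used[OF inf fE])
  show ?thesis
  proof (cases "l < m")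
    case True
    then show ?thesis using Wb_sub[where E=E, OF True] u[of m] by blast
  next
    case False
    then have "m < l" using lm by simp
    then show ?thesis using Wb_sub[where E=E and l=m and m=l] u[of l] by blast
  qed
qed



lemma restr_idem: "restr (restr y W) W = restr y W"
  by (simp add: restr_def fun_eq_iff)

lemma nsq_restr_eq: assumes "fin_vec x" shows "nsq (restr x W) = (\<Sum>t\<in>supp x \<inter> W. (cmod (x t))\<^sup>2)"
proof -
  have "nsq (restr x W) = (\<Sum>t\<in>supp x \<inter> W. (cmod (restr x W t))\<^sup>2)"
    by (rule nsq_superset) (use assms in \<open>auto simp: fin_vec_def supp_def restr_def split: if_splits\<close>)
  also have "\<dots> = (\<Sum>t\<in>supp x \<inter> W. (cmod (x t))\<^sup>2)" by (simp add: restr_def)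
  finally show ?thesis .
qed

lemma nsq_restr_sum:
  assumes fx: "fin_vec x" and fM: "finite M" and disj: "\<And>l m. l \<in> M \<Longrightarrow> m \<in> M \<Longrightarrow> l \<noteq> m \<Longrightarrow> W l \<inter> W m = {}"
  shows "(\<Sum>m\<in>M. nsq (restr x (W m))) \<le> nsq x"
proof -
  have fs: "finite (supp x)" using fx by (simp add: fin_vec_def)
  have "(\<Sum>m\<in>M. nsq (restr x (W m))) = (\<Sum>m\<in>M. \<Sum>t\<in>supp x \<inter> W m. (cmod (x t))\<^sup>2)"
    by (simp add: nsq_restr_eq[OF fx])
  also have "\<dots> = (\<Sum>t\<in>(\<Union>m\<in>M. supp x \<inter> W m). (cmod (x t))\<^sup>2)"
    by (rule sum.UNION_disjoint[symmetric]) (use fM fs disj in auto)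
  also have "\<dots> \<le> (\<Sum>t\<in>supp x. (cmod (x t))\<^sup>2)"
    by (rule sum_mono2) (use fs in auto)
  finally show ?thesis by (simp add: nsq_def)
qed

lemma unif_inf:
  fixes \<phi> :: "'g::group_add \<Rightarrow> complex"
  assumes inf: "infinite (UNIV :: 'g set)" and sm: "schur_mult (\<lambda>s t. \<phi> (s + - t))"
  shows "\<exists>R\<ge>0. \<forall>A. mat_bounded A \<longrightarrow> mat_norm (\<lambda>s t. \<phi> (s + - t) * A s t) \<le> R * mat_norm A"
proof (rule ccontr)
  assume nb: "\<not> ?thesis"
  define Q where "Q = (\<lambda>(m::nat) (P :: 'g \<Rightarrow> 'g \<Rightarrow> complex) (\<xi> :: 'g \<Rightarrow> complex) (\<eta> :: 'g \<Rightarrow> complex).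
     fin_vec \<xi> \<and> fin_vec \<eta> \<and> l2norm \<xi> \<le> 1 \<and> l2norm \<eta> \<le> 1 \<and>
     (\<forall>x y. fin_vec x \<longrightarrow> fin_vec y \<longrightarrow> cmod (mat_form P x y) \<le> l2norm x * l2norm y) \<and>
     (\<forall>s t. P s t \<noteq> 0 \<longrightarrow> s \<in> supp \<eta> \<and> t \<in> supp \<xi>) \<and>
     real m < cmod (mat_form (\<lambda>s t. \<phi> (s + - t) * P s t) \<xi> \<eta>))"
  have ex: "\<exists>P \<xi> \<eta>. Q m P \<xi> \<eta>" for m
  proof -
    have "\<not> (\<forall>A. mat_bounded A \<longrightarrow> mat_norm (\<lambda>s t. \<phi> (s + - t) * A s t) \<le> real m * mat_norm A)"
      using nb of_nat_0_le_iff by blast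
    then obtain A where A: "mat_bounded A" and big: "real m * mat_norm A < mat_norm (\<lambda>s t. \<phi> (s + - t) * A s t)"
      by (auto simp: not_le)
    show ?thesis using bad_block[OF sm A big] unfolding Q_def by simp
  qed
  then have "\<forall>m. \<exists>P \<xi> \<eta>. Q m P \<xi> \<eta>" by blast
  then obtain P \<xi> \<eta> where HQ: "\<forall>m. Q m (P m) (\<xi> m) (\<eta> m)" by metis
  have f\<xi>: "fin_vec (\<xi> m)" and f\<eta>: "fin_vec (\<eta> m)" and n\<xi>: "l2norm (\<xi> m) \<le> 1" and n\<eta>: "l2norm (\<eta> m) \<le> 1"
    and bP: "\<And>x y. fin_vec x \<Longrightarrow> fin_vec y \<Longrightarrow> cmod (mat_form (P m) x y) \<le> l2norm x * l2norm y"
    and sP: "\<And>s t. P m s t \<noteq> 0 \<Longrightarrow> s \<in> supp (\<eta> m) \<and> t \<in> supp (\<xi> m)"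
    and bigm: "real m < cmod (mat_form (\<lambda>s t. \<phi> (s + - t) * P m s t) (\<xi> m) (\<eta> m))" for m
    using HQ unfolding Q_def by auto
  define E where "E = (\<lambda>m. supp (\<xi> m) \<union> supp (\<eta> m))"
  have fE: "finite (E m)" for m using f\<xi> f\<eta> by (simp add: E_def fin_vec_def)
  define g where "g = gtr E"
  define W where "W = Wb E"
  have W_def2: "W m = (\<lambda>x. x + g m) ` E m" for m by (simp add: W_def g_def Wb_def)
  have disj: "l \<noteq> m \<Longrightarrow> W l \<inter> W m = {}" for l m unfolding W_def by (rule Wb_disj[OF inf fE])
  have inW: "s + - g m \<in> E m \<Longrightarrow> s \<in> W m" for s m
    unfolding W_def2 by (rule image_eqI[where x = "s + - g m"]) (simp add: add.assoc)
  define P' where "P' = (\<lambda>m s t. P m (s + - g m) (t + - g m))"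
  have P'supp: "P' m s t \<noteq> 0 \<Longrightarrow> s \<in> W m \<and> t \<in> W m" for m s t
    using sP[of m "s + - g m" "t + - g m"] inW by (auto simp: P'_def E_def)
  define idx where "idx = (\<lambda>s. SOME m. s \<in> W m)"
  have idx_eq: "s \<in> W m \<Longrightarrow> idx s = m" for s m
  proof -
    assume sm: "s \<in> W m"
    then have "s \<in> W (idx s)" unfolding idx_def by (rule someI)
    then show "idx s = m" using disj sm by blast
  qed
  define A0 where "A0 = (\<lambda>s t. P' (idx s) s t)"
  have A0W: "s \<in> W m \<Longrightarrow> A0 s t = P' m s t" for s t m by (simp add: A0_def idx_eq)
  have A0nz: "A0 s t \<noteq> 0 \<Longrightarrow> s \<in> W (idx s)" for s t using P'supp by (auto simp: A0_def)
  have P'bound: "cmod (mat_form (P' m) x y) \<le> l2norm x * l2norm y" if fxy: "fin_vec x" "fin_vec y" for m x y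
  proof -
    have "mat_form (P' m) x y = mat_form (P m) (\<lambda>s. x (s + g m)) (\<lambda>s. y (s + g m))"
      using form_tr[of "P m" "- g m" "\<lambda>s. x (s + g m)" "\<lambda>s. y (s + g m)"] by (simp add: P'_def)
    also have "cmod \<dots> \<le> l2norm (\<lambda>s. x (s + g m)) * l2norm (\<lambda>s. y (s + g m))"
      by (rule bP[OF fin_tr[OF fxy(1)] fin_tr[OF fxy(2)]])
    finally show ?thesis by (simp add: l2norm_tr)
  qed
  have A0b: "cmod (mat_form A0 x y) \<le> 1 * l2norm x * l2norm y" if fx: "fin_vec x" and fy: "fin_vec y" for x y
  proof -
    have fsx: "finite (supp x)" and fsy: "finite (supp y)" using fx fy by (auto simp: fin_vec_def)
    define M where "M = {m. W m \<inter> supp y \<noteq> {}}"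
    have "M \<subseteq> idx ` supp y" unfolding M_def using idx_eq by blast
    then have fM: "finite M" using fsy finite_subset by blast
    have disjM: "\<And>l m. l \<in> M \<Longrightarrow> m \<in> M \<Longrightarrow> l \<noteq> m \<Longrightarrow> W l \<inter> W m = {}" using disj by blast
    have "mat_form A0 x y = (\<Sum>s\<in>supp y. \<Sum>t\<in>supp x. cnj (y s) * A0 s t * x t)"
      by (simp add: mat_form_def)
    also have "\<dots> = (\<Sum>s\<in>(\<Union>m\<in>M. supp y \<inter> W m). \<Sum>t\<in>supp x. cnj (y s) * A0 s t * x t)"
    proof (rule sum.mono_neutral_right[OF fsy])
      show "(\<Union>m\<in>M. supp y \<inter> W m) \<subseteq> supp y" by auto
      show "\<forall>s\<in>supp y - (\<Union>m\<in>M. supp y \<inter> W m). (\<Sum>t\<in>supp x. cnj (y s) * A0 s t * x t) = 0"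
      proof
        fix s assume s: "s \<in> supp y - (\<Union>m\<in>M. supp y \<inter> W m)"
        have "A0 s t = 0" for t
        proof (rule ccontr)
          assume "A0 s t \<noteq> 0"
          then have "s \<in> W (idx s)" by (rule A0nz)
          then have "idx s \<in> M" using s by (auto simp: M_def)
          then show False using s \<open>s \<in> W (idx s)\<close> by auto
        qed
        then show "(\<Sum>t\<in>supp x. cnj (y s) * A0 s t * x t) = 0" by simp
      qed
    qed
    also have "\<dots> = (\<Sum>m\<in>M. \<Sum>s\<in>supp y \<inter> W m. \<Sum>t\<in>supp x. cnj (y s) * A0 s t * x t)"
      by (rule sum.UNION_disjoint) (use fM fsy disjM in auto)
    also have "\<dots> = (\<Sum>m\<in>M. mat_form (P' m) (restr x (W m)) (restr y (W m)))"
    proof (rule sum.cong[OF refl])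
      fix m assume "m \<in> M"
      have "mat_form (P' m) x (restr y (W m)) = (\<Sum>s\<in>supp y \<inter> W m. \<Sum>t\<in>supp x. cnj (restr y (W m) s) * P' m s t * x t)"
        by (rule form_superset) (use fsx fsy in \<open>auto simp: supp_def restr_def split: if_splits\<close>)
      also have "\<dots> = (\<Sum>s\<in>supp y \<inter> W m. \<Sum>t\<in>supp x. cnj (y s) * A0 s t * x t)"
        by (intro sum.cong refl) (auto simp: restr_def A0W)
      finally have "(\<Sum>s\<in>supp y \<inter> W m. \<Sum>t\<in>supp x. cnj (y s) * A0 s t * x t) = mat_form (P' m) x (restr y (W m))" by simp
      also have "\<dots> = mat_form (P' m) (restr x (W m)) (restr (restr y (W m)) (W m))"
        by (rule form_restr[OF fx fin_restr[OF fy]]) (use P'supp in blast)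
      finally show "(\<Sum>s\<in>supp y \<inter> W m. \<Sum>t\<in>supp x. cnj (y s) * A0 s t * x t) =
          mat_form (P' m) (restr x (W m)) (restr y (W m))" by (simp add: restr_idem)
    qed
    finally have eq: "mat_form A0 x y = (\<Sum>m\<in>M. mat_form (P' m) (restr x (W m)) (restr y (W m)))" .
    have "cmod (mat_form A0 x y) \<le> (\<Sum>m\<in>M. cmod (mat_form (P' m) (restr x (W m)) (restr y (W m))))"
      unfolding eq by (rule norm_sum)
    also have "\<dots> \<le> (\<Sum>m\<in>M. l2norm (restr x (W m)) * l2norm (restr y (W m)))"
      by (intro sum_mono P'bound fin_restr fx fy)
    also have "\<dots> \<le> sqrt (\<Sum>m\<in>M. (l2norm (restr x (W m)))\<^sup>2) * sqrt (\<Sum>m\<in>M. (l2norm (restr y (W m)))\<^sup>2)"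
      by (rule cs_sqrt)
    also have "\<dots> \<le> sqrt (nsq x) * sqrt (nsq y)"
      unfolding l2norm_sq
      by (intro mult_mono real_sqrt_le_mono nsq_restr_sum fx fy fM disjM) (auto simp: nsq_nonneg sum_nonneg)
    finally show ?thesis by (simp add: l2norm_nsq)
  qed
  have bA0: "mat_bounded A0" by (rule N2(1)[of 1]) (use A0b in auto)
  have "mat_bounded (\<lambda>s t. \<phi> (s + - t) * A0 s t)" using sm bA0 unfolding schur_mult_def by blast
  then obtain C where C: "\<And>x y. fin_vec x \<Longrightarrow> fin_vec y \<Longrightarrow>
      cmod (mat_form (\<lambda>s t. \<phi> (s + - t) * A0 s t) x y) \<le> C * l2norm x * l2norm y"
    unfolding mat_bounded_def by blast
  obtain m :: nat where mC: "max C 0 < real m" using reals_Archimedean2 by blast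
  define x' where "x' = (\<lambda>s. \<xi> m (s + - g m))"
  define y' where "y' = (\<lambda>s. \<eta> m (s + - g m))"
  have fx': "fin_vec x'" "fin_vec y'" unfolding x'_def y'_def by (intro fin_tr f\<xi> f\<eta>)+
  have nx': "l2norm x' \<le> 1" "l2norm y' \<le> 1"
    unfolding x'_def y'_def l2norm_tr[of "\<xi> m" "- g m"] l2norm_tr[of "\<eta> m" "- g m"] by (simp_all only: n\<xi> n\<eta>)
  have "mat_form (\<lambda>s t. \<phi> (s + - t) * A0 s t) x' y' = mat_form (\<lambda>s t. \<phi> (s + - t) * P' m s t) x' y'"
    unfolding mat_form_def
  proof (rule sum.cong[OF refl], rule sum.cong[OF refl])
    fix s t assume "s \<in> supp y'"
    then have "s + - g m \<in> E m" by (simp add: y'_def supp_def E_def)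
    then have "s \<in> W m" by (rule inW)
    then show "cnj (y' s) * (\<phi> (s + - t) * A0 s t) * x' t = cnj (y' s) * (\<phi> (s + - t) * P' m s t) * x' t"
      by (simp add: A0W)
  qed
  also have "\<dots> = mat_form (\<lambda>s t. \<phi> (s + - t) * P m s t) (\<xi> m) (\<eta> m)"
  proof -
    have eqf: "(\<lambda>s t. \<phi> (s + - t) * P' m s t) = (\<lambda>s t. (\<lambda>s t. \<phi> (s + - t) * P m s t) (s + - g m) (t + - g m))"
      by (simp only: P'_def grp3)
    show ?thesis unfolding x'_def y'_def eqf by (rule form_tr[of "\<lambda>s t. \<phi> (s + - t) * P m s t" "- g m" "\<xi> m" "\<eta> m"])
  qed
  finally have eqm: "mat_form (\<lambda>s t. \<phi> (s + - t) * A0 s t) x' y' = mat_form (\<lambda>s t. \<phi> (s + - t) * P m s t) (\<xi> m) (\<eta> m)" .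
  have "real m < cmod (mat_form (\<lambda>s t. \<phi> (s + - t) * A0 s t) x' y')" using bigm[of m] eqm by simp
  also have "\<dots> \<le> C * l2norm x' * l2norm y'" by (rule C[OF fx'])
  also have "\<dots> \<le> max C 0 * l2norm x' * l2norm y'"
    by (intro mult_right_mono l2norm_nonneg) auto
  also have "\<dots> \<le> max C 0 * 1 * 1"
    by (intro mult_mono nx' l2norm_nonneg) auto
  finally show False using mC by simp
qed



lemma unif:
  fixes \<phi> :: "'g::group_add \<Rightarrow> complex"
  assumes sm: "schur_mult (\<lambda>s t. \<phi> (s + - t))"
  shows "\<exists>R\<ge>0. \<forall>A. mat_bounded A \<longrightarrow> mat_norm (\<lambda>s t. \<phi> (s + - t) * A s t) \<le> R * mat_norm A"
proof (cases "finite (UNIV :: 'g set)")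
  case True
  show ?thesis using unif_fin[OF True sm] by simp
next
  case False
  show ?thesis by (rule unif_inf[OF False sm])
qed

lemma main_equiv:
  fixes \<sigma> :: "'g::group_add \<Rightarrow> 'g \<Rightarrow> complex" and \<phi> :: "'g \<Rightarrow> complex"
  assumes "cocycle2 \<sigma>"
  shows "\<phi> \<in> M0A \<sigma> \<longleftrightarrow> schur_mult (\<lambda>s t. \<phi> (s + - t))"
    and "\<phi> \<in> M0A \<sigma> \<Longrightarrow> cb_norm \<sigma> \<phi> = schur_norm (\<lambda>s t. \<phi> (s + - t))"
proof -
  have s: "\<forall>g h. cmod (\<sigma> g h) = 1" and coc: "\<forall>g h k. \<sigma> g h * \<sigma> (g + h) k = \<sigma> h k * \<sigma> g (h + k)"
    using assms by (auto simp: cocycle2_def)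
  have AtoS: "schur_mult (\<lambda>s t. \<phi> (s + - t))" if "cb_bound \<sigma> \<phi> K" for K
    unfolding schur_mult_def using A_dir(1)[OF s coc that] by blast
  show eqv: "\<phi> \<in> M0A \<sigma> \<longleftrightarrow> schur_mult (\<lambda>s t. \<phi> (s + - t))"
  proof
    assume "\<phi> \<in> M0A \<sigma>"
    then obtain K where "cb_bound \<sigma> \<phi> K" by (auto simp: M0A_def)
    then show "schur_mult (\<lambda>s t. \<phi> (s + - t))" by (rule AtoS)
  next
    assume sm: "schur_mult (\<lambda>s t. \<phi> (s + - t))"
    obtain R where R0: "0 \<le> R" and RB: "\<forall>A. mat_bounded A \<longrightarrow> mat_norm (\<lambda>s t. \<phi> (s + - t) * A s t) \<le> R * mat_norm A"
      using unif[OF sm] by blast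
    show "\<phi> \<in> M0A \<sigma>" unfolding M0A_def using B_dir[OF s sm R0 RB] by blast
  qed
  assume m: "\<phi> \<in> M0A \<sigma>"
  then have sm: "schur_mult (\<lambda>s t. \<phi> (s + - t))" using eqv by blast
  have "{K. cb_bound \<sigma> \<phi> K} = {C. 0 \<le> C \<and> (\<forall>A. mat_bounded A \<longrightarrow> mat_norm (\<lambda>s t. \<phi> (s + - t) * A s t) \<le> C * mat_norm A)}"
  proof (intro equalityI subsetI)
    fix K assume "K \<in> {K. cb_bound \<sigma> \<phi> K}"
    then have cb: "cb_bound \<sigma> \<phi> K" by simp
    then have "0 \<le> K" by (simp add: cb_bound_def)
    then show "K \<in> {C. 0 \<le> C \<and> (\<forall>A. mat_bounded A \<longrightarrow> mat_norm (\<lambda>s t. \<phi> (s + - t) * A s t) \<le> C * mat_norm A)}"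
      using A_dir(2)[OF s coc cb] by blast
  next
    fix C assume "C \<in> {C. 0 \<le> C \<and> (\<forall>A. mat_bounded A \<longrightarrow> mat_norm (\<lambda>s t. \<phi> (s + - t) * A s t) \<le> C * mat_norm A)}"
    then have C0: "0 \<le> C" and CB: "\<forall>A. mat_bounded A \<longrightarrow> mat_norm (\<lambda>s t. \<phi> (s + - t) * A s t) \<le> C * mat_norm A"
      by auto
    show "C \<in> {K. cb_bound \<sigma> \<phi> K}" using B_dir(1)[OF s sm C0 CB] by simp
  qed
  then show "cb_norm \<sigma> \<phi> = schur_norm (\<lambda>s t. \<phi> (s + - t))"
    unfolding cb_norm_def schur_norm_def by simp
qed

theorem proposition4p3:
  fixes \<sigma> :: "'g::group_add \<Rightarrow> 'g \<Rightarrow> complex" and \<phi> :: "'g \<Rightarrow> complex"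
  assumes "cocycle2 \<sigma>"
  shows "M0A \<sigma> = M0A (\<lambda>_ _. 1)
       \<and> (\<phi> \<in> M0A \<sigma> \<longleftrightarrow> schur_mult (\<lambda>s t. \<phi> (s + - t)))
       \<and> (\<phi> \<in> M0A \<sigma> \<longrightarrow> cb_norm \<sigma> \<phi> = schur_norm (\<lambda>s t. \<phi> (s + - t))
                         \<and> cb_norm \<sigma> \<phi> = cb_norm (\<lambda>_ _. 1) \<phi>)"
proof -
  have c1: "cocycle2 (\<lambda>_ _. 1 :: complex)" by (simp add: cocycle2_def)
  have e1: "M0A \<sigma> = M0A (\<lambda>_ _. 1 :: complex)"
  proof (intro equalityI subsetI)
    fix \<psi> :: "'g \<Rightarrow> complex"
    assume "\<psi> \<in> M0A \<sigma>"
    then show "\<psi> \<in> M0A (\<lambda>_ _. 1)" using main_equiv(1)[OF assms] main_equiv(1)[OF c1] by blast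
  next
    fix \<psi> :: "'g \<Rightarrow> complex"
    assume "\<psi> \<in> M0A (\<lambda>_ _. 1)"
    then show "\<psi> \<in> M0A \<sigma>" using main_equiv(1)[OF assms] main_equiv(1)[OF c1] by blast
  qed
  have e3: "cb_norm \<sigma> \<phi> = schur_norm (\<lambda>s t. \<phi> (s + - t)) \<and> cb_norm \<sigma> \<phi> = cb_norm (\<lambda>_ _. 1) \<phi>"
    if m: "\<phi> \<in> M0A \<sigma>"
  proof -
    have m1: "\<phi> \<in> M0A (\<lambda>_ _. 1 :: complex)" using m e1 by simp
    show ?thesis using main_equiv(2)[OF assms m] main_equiv(2)[OF c1 m1] by simp
  qed
  show ?thesis using e1 main_equiv(1)[OF assms] e3 by blast
qed


end
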